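(* Let $H$, $B$, $b$, $V$, $A(\cdot)$, $\|A\|$ be as in the context, let $c>0$ and $\gamma=cI$. Assume $$\|A\|<c\sqrt{b+\tfrac{c^2}{4}}-\tfrac{c^2}{2}.$$ Then there exist constants $\delta>0$ and $M>0$ such that every (mild) solution $u$ of $$u''(t)+\big[B+A(t)\big]u(t)+c\,u'(t)=0,\quad t\ge 0,\qquad u(0)=u_0\in V,\ u'(0)=u_1\in H,$$ satisfies $$\|u(t)\|^2+|u'(t)|^2\le M\big[\|u(s)\|^2+|u'(s)|^2\big]e^{-\delta(t-s)}\quad\text{whenever } 0\le s\le t.$$
   Context: $H$ is a real Hilbert space with inner product $\langle\cdot,\cdot\rangle$ and norm $|\cdot|$. $B$ is a self-adjoint linear operator on $H$ with dense domain, coercive: there is $b>0$ with $\langle Bv,v\rangle\ge b|v|^2$ for all $v$ in its domain. $V=D(B^{1/2})$ with norm $\|v\|=|B^{1/2}v|$; $V'$ is its dual and $B$ is identified with its extension in $L(V,V')$. $A\in L^\infty(\mathbb{R}^+,L(H))$ and $\|A\|=\operatorname{ess\,sup}_{t\ge0}\|A(t)\|_{L(H)}$. A mild solution is a function $u\in C([0,\infty),V)\cap C^1([0,\infty),H)\cap W^{2,\infty}_{\mathrm{loc}}([0,\infty),V')$ satisfying the equation in $V'$ for a.e. $t$ and the initial conditions. *)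

theory Defs
  imports "HOL-Analysis.Analysis"
begin

text \<open>Unbounded linear operators on a real Hilbert space are represented by a
  domain D and a function T (whose values outside D are irrelevant).\<close>

definition linear_op_on :: "'a::real_inner set \<Rightarrow> ('a \<Rightarrow> 'a) \<Rightarrow> bool" where
  "linear_op_on D T \<longleftrightarrow> subspace D \<and>
     (\<forall>x\<in>D. \<forall>y\<in>D. T (x + y) = T x + T y) \<and> (\<forall>r. \<forall>x\<in>D. T (r *\<^sub>R x) = r *\<^sub>R T x)"

definition adjoint_domain :: "'a::real_inner set \<Rightarrow> ('a \<Rightarrow> 'a) \<Rightarrow> 'a set" where
  "adjoint_domain D T = {y. \<exists>z. \<forall>x\<in>D. inner (T x) y = inner x z}"

definition self_adjoint_op :: "'a::real_inner set \<Rightarrow> ('a \<Rightarrow> 'a) \<Rightarrow> bool" where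
  "self_adjoint_op D T \<longleftrightarrow> linear_op_on D T \<and> closure D = UNIV \<and>
     (\<forall>x\<in>D. \<forall>y\<in>D. inner (T x) y = inner x (T y)) \<and> adjoint_domain D T = D"

text \<open>(DS, S) is the square root B^(1/2) of (DB, B): the nonnegative self-adjoint
  operator with S o S = B (as operators, including domains).  It exists and is
  unique for every nonnegative self-adjoint B.\<close>
definition is_sqrt_op :: "'a::real_inner set \<Rightarrow> ('a \<Rightarrow> 'a) \<Rightarrow> 'a set \<Rightarrow> ('a \<Rightarrow> 'a) \<Rightarrow> bool" where
  "is_sqrt_op DS S DB B \<longleftrightarrow> self_adjoint_op DS S \<and> (\<forall>x\<in>DS. 0 \<le> inner (S x) x) \<and>
     DB = {x\<in>DS. S x \<in> DS} \<and> (\<forall>x\<in>DB. B x = S (S x))"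

text \<open>Mild solution of u'' + [B + A(t)] u + c u' = 0, u(0) = u0, u'(0) = u1,
  with V = DS, norm on V given by |S v|.  u' is the derivative of u.
  The equation in V' is expressed by testing against every v in V:
  the V'-valued function u' satisfies
  u'(t) = u1 - int_0^t (B u + A u + c u') ds  in V' (this is equivalent to
  u' in W^{1,inf}_loc(V') together with the equation a.e. in V').\<close>
definition mild_solution ::
  "'a::{real_inner,complete_space} set \<Rightarrow> ('a \<Rightarrow> 'a) \<Rightarrow> (real \<Rightarrow> 'a \<Rightarrow>\<^sub>L 'a) \<Rightarrow> real \<Rightarrow>
   'a \<Rightarrow> 'a \<Rightarrow> (real \<Rightarrow> 'a) \<Rightarrow> (real \<Rightarrow> 'a) \<Rightarrow> bool" where
  "mild_solution DS S A c u0 u1 u u' \<longleftrightarrow>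
     (\<forall>t\<ge>0. u t \<in> DS) \<and>
     continuous_on {0..} (\<lambda>t. S (u t)) \<and> continuous_on {0..} u \<and>
     (\<forall>t\<ge>0. (u has_vector_derivative u' t) (at t within {0..})) \<and>
     continuous_on {0..} u' \<and>
     u 0 = u0 \<and> u' 0 = u1 \<and>
     (\<forall>v\<in>DS. \<forall>t\<ge>0.
        (\<lambda>s. inner (S (u s)) (S v) + inner (blinfun_apply (A s) (u s)) v + c * inner (u' s) v)
          integrable_on {0..t} \<and>
        inner (u' t) v = inner u1 v -
          integral {0..t} (\<lambda>s. inner (S (u s)) (S v) + inner (blinfun_apply (A s) (u s)) v
                                 + c * inner (u' s) v))"

end

theory Submission
  imports Defs
begin

typedef (overloaded) ('a::"{real_inner,complete_space}") hw = "UNIV :: 'a set" by auto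

setup_lifting type_definition_hw

instantiation hw :: ("{real_inner,complete_space}") real_inner
begin
lift_definition zero_hw :: "'a hw" is 0 .
lift_definition plus_hw :: "'a hw \<Rightarrow> 'a hw \<Rightarrow> 'a hw" is "(+)" .
lift_definition minus_hw :: "'a hw \<Rightarrow> 'a hw \<Rightarrow> 'a hw" is "(-)" .
lift_definition uminus_hw :: "'a hw \<Rightarrow> 'a hw" is uminus .
lift_definition scaleR_hw :: "real \<Rightarrow> 'a hw \<Rightarrow> 'a hw" is scaleR .
lift_definition norm_hw :: "'a hw \<Rightarrow> real" is norm .
lift_definition inner_hw :: "'a hw \<Rightarrow> 'a hw \<Rightarrow> real" is inner .
lift_definition dist_hw :: "'a hw \<Rightarrow> 'a hw \<Rightarrow> real" is dist .
lift_definition sgn_hw :: "'a hw \<Rightarrow> 'a hw" is sgn .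
definition uniformity_hw :: "('a hw \<times> 'a hw) filter"
  where "uniformity_hw = (INF e\<in>{0<..}. principal {(x, y). dist x y < e})"
definition open_hw :: "'a hw set \<Rightarrow> bool"
  where "open_hw U = (\<forall>x\<in>U. \<forall>\<^sub>F (x', y) in uniformity. x' = x \<longrightarrow> y \<in> U)"
instance
  apply (intro_classes; ((simp add: uniformity_hw_def open_hw_def; fail)?))
  apply (transfer; simp add: algebra_simps scaleR_add_right scaleR_add_left dist_norm sgn_div_norm
      inner_commute inner_add_left norm_eq_sqrt_inner)+
  done
end

lemma hw_dist: "dist (Abs_hw x) (Abs_hw y) = dist x y"
  by (simp add: dist_hw.abs_eq eq_onp_same_args)
lemma hw_norm: "norm (Abs_hw x) = norm x"
  by (simp add: norm_hw.abs_eq eq_onp_same_args)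
lemma hw_inner: "inner (Abs_hw x) (Abs_hw y) = inner x y"
  by (simp add: inner_hw.abs_eq eq_onp_same_args)
lemma Rep_hw_inner: "inner (Rep_hw x) w = inner x (Abs_hw w)"
  using hw_inner[of "Rep_hw x" w] by (simp add: Rep_hw_inverse)
lemma Rep_hw_dist: "dist (Rep_hw x) (Rep_hw y) = dist x y"
  using hw_dist[of "Rep_hw x" "Rep_hw y"] by (simp add: Rep_hw_inverse)

instance hw :: ("{real_inner,complete_space}") complete_space
proof (intro_classes)
  fix X :: "nat \<Rightarrow> 'a hw" assume X: "Cauchy X"
  have "Cauchy (\<lambda>n. Rep_hw (X n))" using X unfolding Cauchy_def by (simp add: Rep_hw_dist)
  then obtain L where L: "(\<lambda>n. Rep_hw (X n)) \<longlonglongrightarrow> L" using Cauchy_convergent_iff convergent_def by blast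
  have dd: "dist (X n) (Abs_hw L) = dist (Rep_hw (X n)) L" for n
    using hw_dist[of "Rep_hw (X n)" L] by (simp add: Rep_hw_inverse)
  have "X \<longlonglongrightarrow> Abs_hw L"
    using L unfolding tendsto_iff dd .
  then show "convergent X" unfolding convergent_def by blast
qed

instance hw :: ("{real_inner,complete_space}") banach ..

lemma bl_Abs_hw: "bounded_linear Abs_hw"
proof
  fix x y :: 'a and r :: real
  show "Abs_hw (x + y) = Abs_hw x + Abs_hw y" by (simp add: plus_hw.abs_eq eq_onp_same_args)
  show "Abs_hw (r *\<^sub>R x) = r *\<^sub>R Abs_hw x" by (simp add: scaleR_hw.abs_eq eq_onp_same_args)
  show "\<exists>K. \<forall>x. norm (Abs_hw x) \<le> norm x * K" by (rule exI[of _ 1]) (simp add: hw_norm)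
qed

lemma bl_Rep_hw: "bounded_linear Rep_hw"
proof
  fix x y :: "'a hw" and r :: real
  show "Rep_hw (x + y) = Rep_hw x + Rep_hw y" by transfer simp
  show "Rep_hw (r *\<^sub>R x) = r *\<^sub>R Rep_hw x" by transfer simp
  show "\<exists>K. \<forall>x::'a hw. norm (Rep_hw x) \<le> norm x * K" by (rule exI[of _ 1]) (transfer, simp)
qed

definition vint :: "real set \<Rightarrow> (real \<Rightarrow> 'a::{real_inner,complete_space}) \<Rightarrow> 'a"
  where "vint S f = Rep_hw (integral S (\<lambda>x. Abs_hw (f x)))"

lemma vint_inner:
  fixes f :: "real \<Rightarrow> 'a::{real_inner,complete_space}"
  assumes "continuous_on {a..b} f"
  shows "(\<lambda>x. inner (f x) w) integrable_on {a..b} \<and> inner (vint {a..b} f) w = integral {a..b} (\<lambda>x. inner (f x) w)"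
proof -
  have c: "continuous_on {a..b} (\<lambda>x. Abs_hw (f x))"
    by (rule continuous_on_compose2[OF linear_continuous_on[OF bl_Abs_hw] assms]) auto
  have i: "(\<lambda>x. Abs_hw (f x)) integrable_on {a..b}" by (rule integrable_continuous_interval[OF c])
  have "integral {a..b} ((\<lambda>y. inner y (Abs_hw w)) \<circ> (\<lambda>x. Abs_hw (f x))) = inner (integral {a..b} (\<lambda>x. Abs_hw (f x))) (Abs_hw w)"
    by (rule integral_linear[OF i bounded_linear_inner_left])
  then have "integral {a..b} (\<lambda>x. inner (f x) w) = inner (vint {a..b} f) w"
    unfolding vint_def o_def by (simp add: hw_inner Rep_hw_inner)
  moreover have "(\<lambda>x. inner (f x) w) integrable_on {a..b}"
    by (rule integrable_continuous_interval) (intro continuous_intros assms)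
  ultimately show ?thesis by simp
qed

lemma vint_deriv:
  fixes f :: "real \<Rightarrow> 'a::{real_inner,complete_space}"
  assumes "continuous_on {a..b} f" "x \<in> {a..b}"
  shows "((\<lambda>s. vint {a..s} f) has_vector_derivative f x) (at x within {a..b})"
proof -
  have c: "continuous_on {a..b} (\<lambda>x. Abs_hw (f x))"
    by (rule continuous_on_compose2[OF linear_continuous_on[OF bl_Abs_hw] assms(1)]) auto
  have d: "((\<lambda>s. integral {a..s} (\<lambda>x. Abs_hw (f x))) has_vector_derivative Abs_hw (f x)) (at x within {a..b})"
    by (rule integral_has_vector_derivative[OF c assms(2)])
  have "((\<lambda>s. Rep_hw (integral {a..s} (\<lambda>x. Abs_hw (f x)))) has_vector_derivative Rep_hw (Abs_hw (f x))) (at x within {a..b})"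
    by (rule bounded_linear.has_vector_derivative[OF bl_Rep_hw d])
  then show ?thesis unfolding vint_def by (simp add: Abs_hw_inverse)
qed

lemma vint_cont:
  fixes f :: "real \<Rightarrow> 'a::{real_inner,complete_space}"
  assumes "continuous_on {a..b} f"
  shows "continuous_on {a..b} (\<lambda>s. vint {a..s} f)"
proof -
  have c: "continuous_on {a..b} (\<lambda>x. Abs_hw (f x))"
    by (rule continuous_on_compose2[OF linear_continuous_on[OF bl_Abs_hw] assms(1)]) auto
  have "continuous_on {a..b} (\<lambda>s. integral {a..s} (\<lambda>x. Abs_hw (f x)))"
    by (rule indefinite_integral_continuous_1[OF integrable_continuous_interval[OF c]])
  then show ?thesis unfolding vint_def
    by (rule continuous_on_compose2[OF linear_continuous_on[OF bl_Rep_hw]]) auto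
qed

lemma hvd_inner:
  assumes "(f has_vector_derivative f') (at x)" "(g has_vector_derivative g') (at x)"
  shows "((\<lambda>t. inner (f t) (g t)) has_real_derivative (inner f' (g x) + inner (f x) g')) (at x)"
proof -
  have "((\<lambda>t. inner (f t) (g t)) has_derivative (*) (inner f' (g x) + inner (f x) g')) (at x)"
    by (rule has_derivative_eq_rhs[OF has_derivative_inner[OF assms[unfolded has_vector_derivative_def]]])
       (simp add: fun_eq_iff algebra_simps)
  then show ?thesis
    by (simp add: has_field_derivative_def)
qed

lemma lin_op:
  assumes "linear_op_on D T"
  shows lin_sub: "subspace D"
    and lin_add: "x \<in> D \<Longrightarrow> y \<in> D \<Longrightarrow> T (x + y) = T x + T y"
    and lin_scale: "x \<in> D \<Longrightarrow> T (r *\<^sub>R x) = r *\<^sub>R T x"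
    and lin_diff: "x \<in> D \<Longrightarrow> y \<in> D \<Longrightarrow> T (x - y) = T x - T y"
proof -
  show "subspace D" using assms by (simp add: linear_op_on_def)
  show "x \<in> D \<Longrightarrow> y \<in> D \<Longrightarrow> T (x + y) = T x + T y" using assms by (simp add: linear_op_on_def)
  show "x \<in> D \<Longrightarrow> T (r *\<^sub>R x) = r *\<^sub>R T x" using assms by (simp add: linear_op_on_def)
  assume xy: "x \<in> D" "y \<in> D"
  have sub: "subspace D" using assms by (simp add: linear_op_on_def)
  have my: "(-1) *\<^sub>R y \<in> D" using subspace_scale[OF sub xy(2)] .
  have add: "\<forall>x\<in>D. \<forall>y\<in>D. T (x + y) = T x + T y" and sc: "\<forall>r. \<forall>x\<in>D. T (r *\<^sub>R x) = r *\<^sub>R T x"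
    using assms by (simp_all add: linear_op_on_def)
  have "T (x + (-1) *\<^sub>R y) = T x + T ((-1) *\<^sub>R y)" using add xy(1) my by blast
  moreover have "T ((-1) *\<^sub>R y) = (-1) *\<^sub>R T y" using sc xy(2) by blast
  ultimately show "T (x - y) = T x - T y" by simp
qed

lemma dense_orth:
  fixes e :: "'a::real_inner"
  assumes "closure D = UNIV" "\<forall>y\<in>D. inner y e = 0"
  shows "e = 0"
proof -
  have "e \<in> closure D" using assms by simp
  then obtain f where f: "\<And>n. f n \<in> D" "f \<longlonglongrightarrow> e" by (meson closure_sequential)
  have "(\<lambda>n. inner (f n) e) \<longlonglongrightarrow> inner e e"
    by (intro tendsto_intros f)
  moreover have "(\<lambda>n. inner (f n) e) = (\<lambda>n. 0)" using f assms by auto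
  ultimately have "(\<lambda>n. 0::real) \<longlonglongrightarrow> inner e e" by simp
  then have "inner e e = 0" using LIMSEQ_unique[OF _ tendsto_const] by metis
  then show ?thesis by simp
qed

lemma closed_graph:
  fixes T :: "'a::real_inner \<Rightarrow> 'a"
  assumes sa: "self_adjoint_op D T" and x: "\<And>n. x n \<in> D" "x \<longlonglongrightarrow> x0"
    and Tx: "(\<lambda>n. T (x n)) \<longlonglongrightarrow> z"
  shows "x0 \<in> D \<and> T x0 = z"
proof -
  have sym: "\<forall>a\<in>D. \<forall>b\<in>D. inner (T a) b = inner a (T b)" and adj: "adjoint_domain D T = D"
    and dense: "closure D = UNIV"
    using sa by (auto simp: self_adjoint_op_def)
  have eq: "inner (T y) x0 = inner y z" if y: "y \<in> D" for y
  proof -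
    have "(\<lambda>n. inner (T y) (x n)) \<longlonglongrightarrow> inner (T y) x0" by (intro tendsto_intros x)
    moreover have "(\<lambda>n. inner (T y) (x n)) \<longlonglongrightarrow> inner y z"
    proof -
      have "(\<lambda>n. inner y (T (x n))) \<longlonglongrightarrow> inner y z" by (intro tendsto_intros Tx)
      moreover have "(\<lambda>n. inner (T y) (x n)) = (\<lambda>n. inner y (T (x n)))" using sym y x by auto
      ultimately show ?thesis by simp
    qed
    ultimately show ?thesis using LIMSEQ_unique by blast
  qed
  have x0D: "x0 \<in> D"
  proof -
    have "x0 \<in> adjoint_domain D T" unfolding adjoint_domain_def using eq by blast
    then show ?thesis using adj by simp
  qed
  have "\<forall>y\<in>D. inner y (T x0 - z) = 0"
    using eq sym x0D by (simp add: inner_diff_right)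
  then have "T x0 - z = 0" using dense_orth[OF dense] by blast
  then show ?thesis using x0D by simp
qed

lemma e_tend: "(\<lambda>n. 1 / (real n + 1)) \<longlonglongrightarrow> 0"
  using LIMSEQ_inverse_real_of_nat by (simp add: inverse_eq_divide add.commute)

lemma orth_min:
  fixes e g :: "'a::real_inner"
  assumes "\<And>s::real. norm e \<le> norm (e + s *\<^sub>R g)"
  shows "inner e g = 0"
proof -
  define k where "k = inner e g"
  define G where "G = inner g g"
  have G0: "G \<ge> 0" unfolding G_def by simp
  define s where "s = - k / (G + 1)"
  have "(norm e)\<^sup>2 \<le> (norm (e + s *\<^sub>R g))\<^sup>2" using assms[of s] by (simp add: power_mono)
  also have "\<dots> = (norm e)\<^sup>2 + 2 * s * k + s\<^sup>2 * G"
    unfolding power2_norm_eq_inner k_def G_def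
    by (simp add: inner_add_left inner_add_right inner_commute power2_eq_square algebra_simps)
  finally have "0 \<le> 2 * s * k + s\<^sup>2 * G" by simp
  then have "0 \<le> (2 * s * k + s\<^sup>2 * G) * (G + 1)\<^sup>2" using G0 by simp
  also have "\<dots> = 2 * k * (s * (G + 1)) * (G + 1) + (s * (G + 1))\<^sup>2 * G"
    by (simp add: power2_eq_square algebra_simps)
  also have "s * (G + 1) = - k" unfolding s_def using G0 by (simp add: field_simps)
  also have "2 * k * (- k) * (G + 1) + (- k)\<^sup>2 * G = - k\<^sup>2 * (G + 2)"
    by (simp add: power2_eq_square algebra_simps)
  finally have "k\<^sup>2 * (G + 2) \<le> 0" by simp
  then have "k\<^sup>2 \<le> 0" using G0 by (simp add: mult_le_0_iff)
  then show ?thesis unfolding k_def by simp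
qed

lemma cauchy_bound:
  fixes X :: "nat \<Rightarrow> 'a::metric_space"
  assumes "\<And>m n. dist (X m) (X n) \<le> f m + f n" "f \<longlonglongrightarrow> 0"
  shows "Cauchy X"
proof (rule metric_CauchyI)
  fix e :: real assume e: "e > 0"
  have "\<exists>N. \<forall>n\<ge>N. norm (f n - 0) < e / 2" using LIMSEQ_D[OF assms(2), of "e/2"] e by simp
  then obtain N where N: "\<And>n. n \<ge> N \<Longrightarrow> norm (f n) < e / 2" by auto
  show "\<exists>M. \<forall>m\<ge>M. \<forall>n\<ge>M. dist (X m) (X n) < e"
  proof (intro exI allI impI)
    fix m n assume "m \<ge> N" "n \<ge> N"
    then have "f m < e/2" "f n < e/2" using N[of m] N[of n] by auto
    then show "dist (X m) (X n) < e" using assms(1)[of m n] by linarith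
  qed
qed

lemma resolvent_lower:
  fixes T :: "'a::real_inner \<Rightarrow> 'a"
  assumes "0 \<le> inner (T x) x" "\<mu> > 0"
  shows "\<mu> * norm x \<le> norm (T x + \<mu> *\<^sub>R x)"
proof -
  have "(norm (T x + \<mu> *\<^sub>R x))\<^sup>2 = (norm (T x))\<^sup>2 + 2 * \<mu> * inner (T x) x + \<mu>\<^sup>2 * (norm x)\<^sup>2"
    unfolding power2_norm_eq_inner
    by (simp add: inner_add_left inner_add_right inner_commute power2_eq_square algebra_simps)
  also have "\<dots> \<ge> (\<mu> * norm x)\<^sup>2" using assms by (simp add: power_mult_distrib)
  finally show ?thesis by (rule power2_le_imp_le) simp
qed

lemma resolvent_surj:
  fixes T :: "'a::{real_inner,complete_space} \<Rightarrow> 'a"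
  assumes sa: "self_adjoint_op D T" and pos: "\<forall>x\<in>D. 0 \<le> inner (T x) x" and mu: "\<mu> > 0"
  shows "\<exists>x\<in>D. T x + \<mu> *\<^sub>R x = w"
proof -
  have lin: "linear_op_on D T" using sa by (simp add: self_adjoint_op_def)
  have sub: "subspace D" using lin_sub[OF lin] .
  define R where "R x = T x + \<mu> *\<^sub>R x" for x
  have Rlow: "\<mu> * norm x \<le> norm (R x)" if "x \<in> D" for x
    unfolding R_def using resolvent_lower[of T x \<mu>] pos that mu by auto
  have Radd: "R (x + y) = R x + R y" if "x \<in> D" "y \<in> D" for x y
    unfolding R_def using lin_add[OF lin that] by (simp add: algebra_simps)
  have Rscale: "R (r *\<^sub>R x) = r *\<^sub>R R x" if "x \<in> D" for x r
    unfolding R_def using lin_scale[OF lin that] by (simp add: algebra_simps)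
  have Rdiff: "R (x - y) = R x - R y" if "x \<in> D" "y \<in> D" for x y
    unfolding R_def using lin_diff[OF lin that] by (simp add: algebra_simps)
  define d where "d = Inf ((\<lambda>x. norm (R x - w)) ` D)"
  have D0: "0 \<in> D" using sub by (simp add: subspace_0)
  have bdd: "bdd_below ((\<lambda>x. norm (R x - w)) ` D)" by (rule bdd_belowI[of _ 0]) auto
  have dle: "d \<le> norm (R y - w)" if "y \<in> D" for y
    unfolding d_def using bdd that by (simp add: cInf_lower)
  have d0: "d \<ge> 0" unfolding d_def by (rule cInf_greatest) (use D0 in auto)
  have "\<exists>x\<in>D. norm (R x - w) < d + 1 / (real n + 1)" for n
  proof -
    have "\<exists>v\<in>(\<lambda>x. norm (R x - w)) ` D. v < d + 1 / (real n + 1)"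
      by (rule cInf_lessD) (use D0 in \<open>auto simp: d_def\<close>)
    then show ?thesis by auto
  qed
  then obtain x where x: "\<And>n. x n \<in> D" "\<And>n. norm (R (x n) - w) < d + 1 / (real n + 1)"
    by metis
  define e where "e n = 1 / (real n + 1)" for n
  have e0: "0 < e n" "e n \<le> 1" for n unfolding e_def by (auto simp: field_simps)
  define C where "C = 4 * d + 2"
  have rdist: "(norm (R (x m) - R (x n)))\<^sup>2 \<le> C * (e m + e n)" for m n
  proof -
    define p where "p = R (x m) - w"
    define q where "q = R (x n) - w"
    have par: "(norm (p - q))\<^sup>2 = 2 * (norm p)\<^sup>2 + 2 * (norm q)\<^sup>2 - (norm (p + q))\<^sup>2"
      unfolding power2_norm_eq_inner
      by (simp add: inner_add_left inner_add_right inner_diff_left inner_diff_right inner_commute)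
    have mid: "(1/2) *\<^sub>R (x m + x n) \<in> D" using x(1) sub by (simp add: subspace_add subspace_scale)
    have "R ((1/2) *\<^sub>R (x m + x n)) = (1/2) *\<^sub>R R (x m + x n)"
      using Rscale x(1) sub by (simp add: subspace_add)
    also have "R (x m + x n) = R (x m) + R (x n)" using Radd x(1) by simp
    finally have "R ((1/2) *\<^sub>R (x m + x n)) = (1/2) *\<^sub>R (R (x m) + R (x n))" .
    then have "p + q = 2 *\<^sub>R (R ((1/2) *\<^sub>R (x m + x n)) - w)"
      unfolding p_def q_def by (simp add: algebra_simps scaleR_2)
    then have "norm (p + q) = 2 * norm (R ((1/2) *\<^sub>R (x m + x n)) - w)" by simp
    then have "norm (p + q) \<ge> 2 * d" using dle[OF mid] by simp
    then have "(2 * d)\<^sup>2 \<le> (norm (p + q))\<^sup>2" by (rule power_mono) (use d0 in auto)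
    then have pq: "(norm (p + q))\<^sup>2 \<ge> 4 * d\<^sup>2" by (simp add: power_mult_distrib)
    have pn: "norm p \<le> d + e m" "norm q \<le> d + e n" using x(2) unfolding p_def q_def e_def by (auto intro: less_imp_le)
    have "(norm p)\<^sup>2 \<le> (d + e m)\<^sup>2" using pn by (simp add: power_mono)
    moreover have "(norm q)\<^sup>2 \<le> (d + e n)\<^sup>2" using pn by (simp add: power_mono)
    ultimately have "(norm (p - q))\<^sup>2 \<le> 2 * (d + e m)\<^sup>2 + 2 * (d + e n)\<^sup>2 - 4 * d\<^sup>2"
      using par pq by linarith
    also have "\<dots> = 4 * d * (e m + e n) + 2 * (e m)\<^sup>2 + 2 * (e n)\<^sup>2" by (simp add: power2_eq_square algebra_simps)
    also have "\<dots> \<le> C * (e m + e n)"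
    proof -
      have "(e m)\<^sup>2 \<le> e m" "(e n)\<^sup>2 \<le> e n" using e0 by (simp_all add: power2_eq_square mult_le_cancel_left1 less_imp_le)
      then show ?thesis unfolding C_def by (simp add: algebra_simps)
    qed
    finally show ?thesis unfolding p_def q_def by simp
  qed
  have C0: "C \<ge> 0" unfolding C_def using d0 by simp
  define f where "f n = sqrt (C * e n)" for n
  have ftend: "f \<longlonglongrightarrow> 0"
  proof -
    have "e \<longlonglongrightarrow> 0" unfolding e_def by (rule e_tend)
    then have "(\<lambda>n. C * e n) \<longlonglongrightarrow> C * 0" by (intro tendsto_intros)
    then have "(\<lambda>n. sqrt (C * e n)) \<longlonglongrightarrow> sqrt (C * 0)" by (rule tendsto_real_sqrt)
    then show ?thesis unfolding f_def by simp
  qed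
  have fb: "norm (R (x m) - R (x n)) \<le> f m + f n" for m n
  proof -
    have "norm (R (x m) - R (x n)) = sqrt ((norm (R (x m) - R (x n)))\<^sup>2)" by simp
    also have "\<dots> \<le> sqrt (C * e m + C * e n)" using rdist[of m n] by (simp add: algebra_simps real_le_rsqrt)
    also have "\<dots> \<le> f m + f n" unfolding f_def
      by (rule sqrt_add_le_add_sqrt) (use C0 e0 less_imp_le in \<open>auto intro!: mult_nonneg_nonneg\<close>)
    finally show ?thesis .
  qed
  have cR: "Cauchy (\<lambda>n. R (x n))"
    by (rule cauchy_bound[OF _ ftend]) (simp add: dist_norm fb)
  have cx: "Cauchy x"
  proof (rule cauchy_bound[of _ "\<lambda>n. f n / \<mu>"])
    show "(\<lambda>n. f n / \<mu>) \<longlonglongrightarrow> 0" using tendsto_divide_zero[OF ftend] by simp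
    fix m n
    have "\<mu> * norm (x m - x n) \<le> norm (R (x m - x n))" using Rlow x(1) sub by (simp add: subspace_diff)
    also have "\<dots> \<le> f m + f n" using fb Rdiff x(1) by simp
    finally show "dist (x m) (x n) \<le> f m / \<mu> + f n / \<mu>" using mu
      by (simp add: dist_norm field_simps mult.commute)
  qed
  obtain r0 where r0: "(\<lambda>n. R (x n)) \<longlonglongrightarrow> r0" using cR convergent_def Cauchy_convergent_iff by blast
  obtain x0 where x0: "x \<longlonglongrightarrow> x0" using cx convergent_def Cauchy_convergent_iff by blast
  have "(\<lambda>n. T (x n)) \<longlonglongrightarrow> r0 - \<mu> *\<^sub>R x0"
  proof -
    have "(\<lambda>n. R (x n) - \<mu> *\<^sub>R x n) \<longlonglongrightarrow> r0 - \<mu> *\<^sub>R x0" by (intro tendsto_intros r0 x0)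
    then show ?thesis unfolding R_def by simp
  qed
  from closed_graph[OF sa x(1) x0 this] have x0D: "x0 \<in> D" and Tx0: "T x0 = r0 - \<mu> *\<^sub>R x0" by auto
  have Rx0: "R x0 = r0" unfolding R_def using Tx0 by simp
  have "norm (r0 - w) \<le> d"
  proof (rule LIMSEQ_le[of "\<lambda>n. norm (R (x n) - w)" _ "\<lambda>n. d + e n"])
    show "(\<lambda>n. norm (R (x n) - w)) \<longlonglongrightarrow> norm (r0 - w)" by (intro tendsto_intros r0)
    have "e \<longlonglongrightarrow> 0" unfolding e_def by (rule e_tend)
    then show "(\<lambda>n. d + e n) \<longlonglongrightarrow> d" using tendsto_add[of "\<lambda>n. d" d sequentially e 0] by simp
    show "\<exists>N. \<forall>n\<ge>N. norm (R (x n) - w) \<le> d + e n" using x(2) unfolding e_def by (auto intro: less_imp_le)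
  qed
  then have minim: "norm (R x0 - w) \<le> norm (R y - w)" if "y \<in> D" for y using dle[OF that] Rx0 by simp
  define ee where "ee = R x0 - w"
  have orth: "inner ee (R y) = 0" if y: "y \<in> D" for y
  proof (rule orth_min)
    fix s :: real
    have "x0 + s *\<^sub>R y \<in> D" using x0D y sub by (simp add: subspace_add subspace_scale)
    then have m: "norm (R x0 - w) \<le> norm (R (x0 + s *\<^sub>R y) - w)" by (rule minim)
    have "R (x0 + s *\<^sub>R y) = R x0 + s *\<^sub>R R y"
      using Radd Rscale x0D y sub by (simp add: subspace_scale)
    then have "R (x0 + s *\<^sub>R y) - w = ee + s *\<^sub>R R y" unfolding ee_def by (simp add: algebra_simps)
    then show "norm ee \<le> norm (ee + s *\<^sub>R R y)" using m unfolding ee_def by metis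
  qed
  have "\<forall>y\<in>D. inner (T y) ee = inner y (- \<mu> *\<^sub>R ee)"
  proof
    fix y assume y: "y \<in> D"
    have "inner ee (T y) + \<mu> * inner ee y = 0" using orth[OF y] unfolding R_def by (simp add: inner_add_right)
    then show "inner (T y) ee = inner y (- \<mu> *\<^sub>R ee)" by (simp add: inner_commute)
  qed
  then have "ee \<in> adjoint_domain D T" unfolding adjoint_domain_def by blast
  then have eeD: "ee \<in> D" using sa by (simp add: self_adjoint_op_def)
  have "inner (T ee) ee = - \<mu> * inner ee ee"
    using orth[OF eeD] unfolding R_def by (simp add: inner_add_right inner_commute)
  then have "\<mu> * inner ee ee \<le> 0" using pos eeD by force
  then have "inner ee ee \<le> 0" using mu by (simp add: mult_le_0_iff)
  then have "inner ee ee = 0" using inner_ge_zero[of ee] by linarith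
  then have "ee = 0" by simp
  then show ?thesis using x0D Rx0 unfolding ee_def R_def by auto
qed

lemma coerc_S:
  fixes S B :: "'a::{real_inner,complete_space} \<Rightarrow> 'a"
  assumes S_sqrt: "is_sqrt_op DS S DB B"
    and coercive: "\<forall>v\<in>DB. inner (B v) v \<ge> b * (norm v)\<^sup>2"
    and v: "v \<in> DS"
  shows "b * (norm v)\<^sup>2 \<le> (norm (S v))\<^sup>2"
proof -
  have sa: "self_adjoint_op DS S" and pos: "\<forall>x\<in>DS. 0 \<le> inner (S x) x"
    and DB: "DB = {x\<in>DS. S x \<in> DS}" and BSS: "\<forall>x\<in>DB. B x = S (S x)"
    using S_sqrt by (auto simp: is_sqrt_op_def)
  have lin: "linear_op_on DS S" using sa by (simp add: self_adjoint_op_def)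
  have sub: "subspace DS" using lin_sub[OF lin] .
  have sym: "\<forall>x\<in>DS. \<forall>y\<in>DS. inner (S x) y = inner x (S y)" using sa by (simp add: self_adjoint_op_def)
  have key: "\<exists>x. b * (norm x)\<^sup>2 \<le> (norm (S v))\<^sup>2 \<and> norm (v - x) \<le> norm (S v) / \<mu>" if mu: "\<mu> > 0" for \<mu>
  proof -
    obtain y where y: "y \<in> DS" "S y + \<mu> *\<^sub>R y = v" using resolvent_surj[OF sa pos mu] by blast
    have qdef: "S y = v - \<mu> *\<^sub>R y" using y by (simp add: algebra_simps)
    have qD: "S y \<in> DS" using qdef v y sub by (simp add: subspace_diff subspace_scale)
    have yDB: "y \<in> DB" using DB y qD by simp
    have "S (S y) = S v - \<mu> *\<^sub>R S y" using qdef lin_diff[OF lin v] lin_scale[OF lin] y sub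
      by (simp add: subspace_scale)
    then have Sq: "S (S y) + \<mu> *\<^sub>R S y = S v" by simp
    have qb: "\<mu> * norm (S y) \<le> norm (S v)" using resolvent_lower[of S "S y" \<mu>] pos qD mu Sq by auto
    have "b * (norm y)\<^sup>2 \<le> inner (B y) y" using coercive yDB by simp
    also have "\<dots> = inner (S (S y)) y" using BSS yDB by simp
    also have "\<dots> = (norm (S y))\<^sup>2" using sym qD y by (simp add: power2_norm_eq_inner)
    finally have hb: "b * (norm y)\<^sup>2 \<le> (norm (S y))\<^sup>2" .
    have "b * (norm (\<mu> *\<^sub>R y))\<^sup>2 = \<mu>\<^sup>2 * (b * (norm y)\<^sup>2)" using mu by (simp add: power_mult_distrib)
    also have "\<dots> \<le> \<mu>\<^sup>2 * (norm (S y))\<^sup>2" using hb by (simp add: mult_left_mono)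
    also have "\<dots> = (\<mu> * norm (S y))\<^sup>2" by (simp add: power_mult_distrib)
    also have "\<dots> \<le> (norm (S v))\<^sup>2" using qb mu by (simp add: power_mono)
    finally have 1: "b * (norm (\<mu> *\<^sub>R y))\<^sup>2 \<le> (norm (S v))\<^sup>2" .
    have "norm (v - \<mu> *\<^sub>R y) = norm (S y)" using qdef by simp
    also have "\<dots> \<le> norm (S v) / \<mu>" using qb mu by (simp add: field_simps mult.commute)
    finally show ?thesis using 1 by blast
  qed
  have "\<forall>n. \<exists>x. b * (norm x)\<^sup>2 \<le> (norm (S v))\<^sup>2 \<and> norm (v - x) \<le> norm (S v) / (real n + 1)"
  proof
    fix n show "\<exists>x. b * (norm x)\<^sup>2 \<le> (norm (S v))\<^sup>2 \<and> norm (v - x) \<le> norm (S v) / (real n + 1)"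
      using key[of "real n + 1"] by simp
  qed
  then obtain x where x: "\<And>n. b * (norm (x n))\<^sup>2 \<le> (norm (S v))\<^sup>2"
    "\<And>n. norm (v - x n) \<le> norm (S v) / (real n + 1)"
    by metis
  have "x \<longlonglongrightarrow> v"
  proof -
    have "(\<lambda>n. norm (S v) * (1 / (real n + 1))) \<longlonglongrightarrow> 0"
      by (rule tendsto_mult_right_zero[OF e_tend])
    then have "(\<lambda>n. norm (S v) / (real n + 1)) \<longlonglongrightarrow> 0" by simp
    then have "(\<lambda>n. norm (x n - v)) \<longlonglongrightarrow> 0"
      by (rule Lim_null_comparison[rotated]) (auto simp: norm_minus_commute x(2))
    then show ?thesis by (simp add: tendsto_norm_zero_iff LIM_zero_cancel)
  qed
  then have "(\<lambda>n. b * (norm (x n))\<^sup>2) \<longlonglongrightarrow> b * (norm v)\<^sup>2" by (intro tendsto_intros)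
  then show ?thesis by (rule LIMSEQ_le_const2) (use x(1) in auto)
qed

locale msol =
  fixes DS :: "'a::{real_inner,complete_space} set" and S :: "'a \<Rightarrow> 'a"
    and A :: "real \<Rightarrow> 'a \<Rightarrow>\<^sub>L 'a" and c K b :: real and u1 :: 'a and u u' :: "real \<Rightarrow> 'a"
  assumes lin: "linear_op_on DS S"
    and mem: "\<And>t. t \<ge> 0 \<Longrightarrow> u t \<in> DS"
    and cSu: "continuous_on {0..} (\<lambda>t. S (u t))"
    and cu: "continuous_on {0..} u"
    and du: "\<And>t. t \<ge> 0 \<Longrightarrow> (u has_vector_derivative u' t) (at t within {0..})"
    and cu': "continuous_on {0..} u'"
    and weak: "\<And>v t. v \<in> DS \<Longrightarrow> t \<ge> 0 \<Longrightarrow>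
        (\<lambda>s. inner (S (u s)) (S v) + inner (blinfun_apply (A s) (u s)) v + c * inner (u' s) v)
          integrable_on {0..t} \<and>
        inner (u' t) v = inner u1 v -
          integral {0..t} (\<lambda>s. inner (S (u s)) (S v) + inner (blinfun_apply (A s) (u s)) v
                                 + c * inner (u' s) v)"
    and Kb: "AE t in lborel. 0 \<le> t \<longrightarrow> norm (A t) \<le> K"
    and K0: "K \<ge> 0" and c0: "c > 0" and b0: "b > 0"
    and coer: "\<And>v. v \<in> DS \<Longrightarrow> b * (norm v)\<^sup>2 \<le> (norm (S v))\<^sup>2"
begin

lemma sub: "subspace DS" using lin_sub[OF lin] .

lemma bad_negligible: "\<exists>N. negligible N \<and> (\<forall>t. t \<ge> 0 \<longrightarrow> t \<notin> N \<longrightarrow> norm (A t) \<le> K)"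
proof -
  obtain N where N0: "{t \<in> space lborel. \<not> (0 \<le> t \<longrightarrow> norm (A t) \<le> K)} \<subseteq> N"
    "emeasure lborel N = 0" "N \<in> sets lborel"
    using AE_E[OF Kb] by blast
  have N: "{t. \<not> (0 \<le> t \<longrightarrow> norm (A t) \<le> K)} \<subseteq> N" "N \<in> null_sets lborel"
    using N0 by auto
  have "N \<in> null_sets lebesgue" using null_sets_completionI[OF N(2)] .
  then have "negligible N" by (simp add: negligible_iff_null_sets)
  then show ?thesis using N(1) by blast
qed

lemma weak_incr:
  assumes t: "t \<ge> 0" and h: "h > 0" and v: "v \<in> DS"
    and R: "\<And>\<tau>. \<tau> \<in> {t..t+h} \<Longrightarrow> norm (u \<tau>) \<le> R"
  shows "\<exists>\<alpha>. inner (u' (t+h) - u' t) v =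
      - (inner (vint {t..t+h} (\<lambda>\<tau>. S (u \<tau>))) (S v) + \<alpha> + c * inner (u (t+h) - u t) v)
      \<and> \<bar>\<alpha>\<bar> \<le> K * h * R * norm v"
proof -
  define F where "F s = inner (S (u s)) (S v) + inner (blinfun_apply (A s) (u s)) v + c * inner (u' s) v" for s
  define f1 where "f1 s = inner (S (u s)) (S v)" for s
  define f2 where "f2 s = inner (blinfun_apply (A s) (u s)) v" for s
  define f3 where "f3 s = inner (u' s) v" for s
  have th: "t + h \<ge> 0" using t h by simp
  have Fi: "F integrable_on {0..t+h}" and e2: "inner (u' (t+h)) v = inner u1 v - integral {0..t+h} F"
    using weak[OF v th] unfolding F_def by auto
  have e1: "inner (u' t) v = inner u1 v - integral {0..t} F"
    using weak[OF v t] unfolding F_def by auto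
  have comb: "integral {0..t} F + integral {t..t+h} F = integral {0..t+h} F"
    using Henstock_Kurzweil_Integration.integral_combine[of 0 t "t+h" F] t h Fi by simp
  have eqF: "inner (u' (t+h) - u' t) v = - integral {t..t+h} F"
    using e1 e2 comb by (simp add: inner_diff_left)
  have sub1: "{t..t+h} \<subseteq> {0..}" using t by auto
  have FI: "F integrable_on {t..t+h}"
    by (rule integrable_subinterval_real[OF Fi]) (use t in auto)
  have cSuI: "continuous_on {t..t+h} (\<lambda>s. S (u s))" using continuous_on_subset[OF cSu sub1] .
  have cu'I: "continuous_on {t..t+h} u'" using continuous_on_subset[OF cu' sub1] .
  have f1c: "continuous_on {t..t+h} f1" unfolding f1_def by (intro continuous_intros cSuI)
  have f3c: "continuous_on {t..t+h} f3" unfolding f3_def by (intro continuous_intros cu'I)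
  have f1i: "f1 integrable_on {t..t+h}" by (rule integrable_continuous_interval[OF f1c])
  have f3i: "f3 integrable_on {t..t+h}" by (rule integrable_continuous_interval[OF f3c])
  have Fsplit: "F = (\<lambda>s. f1 s + f2 s + c * f3 s)" unfolding F_def f1_def f2_def f3_def by auto
  have f2eq: "f2 = (\<lambda>s. F s - f1 s - c * f3 s)" unfolding Fsplit by auto
  have f3ci: "(\<lambda>s. c * f3 s) integrable_on {t..t+h}" using integrable_cmul[OF f3i, of c] by simp
  have f2i: "f2 integrable_on {t..t+h}" unfolding f2eq
    by (intro integrable_diff FI f1i f3ci)
  have intF: "integral {t..t+h} F = integral {t..t+h} f1 + integral {t..t+h} f2 + c * integral {t..t+h} f3"
  proof -
    have "integral {t..t+h} F = integral {t..t+h} (\<lambda>s. f1 s + f2 s) + integral {t..t+h} (\<lambda>s. c * f3 s)"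
      unfolding Fsplit by (rule integral_add) (use f1i f2i f3ci in \<open>auto intro: integrable_add\<close>)
    also have "integral {t..t+h} (\<lambda>s. f1 s + f2 s) = integral {t..t+h} f1 + integral {t..t+h} f2"
      by (rule integral_add[OF f1i f2i])
    also have "integral {t..t+h} (\<lambda>s. c * f3 s) = c * integral {t..t+h} f3" by simp
    finally show ?thesis .
  qed
  have int1: "integral {t..t+h} f1 = inner (vint {t..t+h} (\<lambda>s. S (u s))) (S v)"
    using vint_inner[OF cSuI, of "S v"] unfolding f1_def by simp
  have ftc: "(f3 has_integral (inner (u (t+h)) v - inner (u t) v)) {t..t+h}"
  proof (rule fundamental_theorem_of_calculus)
    show "t \<le> t + h" using h by simp
    fix x assume "x \<in> {t..t+h}"
    then have "x \<ge> 0" using t by auto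
    then have "(u has_vector_derivative u' x) (at x within {t..t+h})"
      using has_vector_derivative_within_subset[OF du sub1] by blast
    from bounded_linear.has_vector_derivative[OF bounded_linear_inner_left this]
    show "((\<lambda>s. inner (u s) v) has_vector_derivative f3 x) (at x within {t..t+h})"
      unfolding f3_def .
  qed
  have int3: "integral {t..t+h} f3 = inner (u (t+h) - u t) v"
    using integral_unique[OF ftc] by (simp add: inner_diff_left)
  obtain N where N: "negligible N" "\<And>s. s \<ge> 0 \<Longrightarrow> s \<notin> N \<Longrightarrow> norm (A s) \<le> K"
    using bad_negligible by blast
  define g where "g s = (if s \<in> N then 0 else f2 s)" for s
  have gint: "integral {t..t+h} g = integral {t..t+h} f2"
    by (rule integral_spike[OF N(1)]) (simp add: g_def)
  have gi: "g integrable_on {t..t+h}"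
    by (rule integrable_spike[OF f2i N(1)]) (simp add: g_def)
  define C where "C = K * R * norm v"
  have gb: "\<bar>g s\<bar> \<le> C" if s: "s \<in> {t..t+h}" for s
  proof (cases "s \<in> N")
    case True
    have "R \<ge> 0" using R[OF s] norm_ge_zero order_trans by blast
    then show ?thesis using True K0 unfolding g_def C_def by simp
  next
    case False
    have s0: "s \<ge> 0" using s t by auto
    have "\<bar>f2 s\<bar> \<le> norm (blinfun_apply (A s) (u s)) * norm v"
      unfolding f2_def by (rule Cauchy_Schwarz_ineq2)
    also have "\<dots> \<le> norm (A s) * norm (u s) * norm v"
      by (intro mult_right_mono norm_blinfun) simp
    also have "\<dots> \<le> K * R * norm v"
      by (intro mult_right_mono mult_mono N(2)[OF s0 False] R[OF s]) (use K0 in auto)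
    finally show ?thesis using False unfolding g_def C_def by simp
  qed
  have "\<bar>integral {t..t+h} g\<bar> \<le> C * h"
  proof -
    have "integral {t..t+h} g \<le> integral {t..t+h} (\<lambda>_. C)"
      by (rule integral_le[OF gi]) (use gb in \<open>auto simp: abs_le_iff\<close>)
    moreover have "integral {t..t+h} (\<lambda>_. - C) \<le> integral {t..t+h} g"
    proof (rule integral_le[OF _ gi])
      show "(\<lambda>_. - C) integrable_on {t..t+h}" by (intro integrable_continuous_interval continuous_intros)
      fix x assume "x \<in> {t..t+h}"
      then show "- C \<le> g x" using gb[of x] by linarith
    qed
    ultimately show ?thesis using h by (simp add: abs_le_iff algebra_simps)
  qed
  then have "\<bar>integral {t..t+h} f2\<bar> \<le> K * h * R * norm v" using gint unfolding C_def by (simp add: algebra_simps)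
  moreover have "inner (u' (t+h) - u' t) v =
      - (inner (vint {t..t+h} (\<lambda>\<tau>. S (u \<tau>))) (S v) + integral {t..t+h} f2 + c * inner (u (t+h) - u t) v)"
    using eqF intF int1 int3 by simp
  ultimately show ?thesis by blast
qed

end

lemma shift_deriv:
  assumes "(f has_vector_derivative f') (at (t + h))"
  shows "((\<lambda>s. f (s + h)) has_vector_derivative f') (at t)"
proof -
  have d: "((\<lambda>s. s + h) has_vector_derivative 1) (at t)"
    unfolding has_real_derivative_iff_has_vector_derivative[symmetric] by (auto intro!: derivative_eq_intros)
  have "(f \<circ> (\<lambda>s. s + h) has_vector_derivative 1 *\<^sub>R f') (at t)"
    by (rule vector_diff_chain_at[OF d]) (use assms in simp)
  then show ?thesis by (simp add: o_def)
qed

context msol begin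

lemma du_at: assumes t: "t > 0" shows "(u has_vector_derivative u' t) (at t)"
proof -
  have "(u has_vector_derivative u' t) (at t within {0<..})"
    by (rule has_vector_derivative_within_subset[OF du]) (use t in auto)
  moreover have "at t within {0<..} = at t" by (rule at_within_open) (use t in auto)
  ultimately show ?thesis by simp
qed

definition V :: "real \<Rightarrow> 'a" where "V s = vint {0..s} (\<lambda>\<tau>. S (u \<tau>))"

lemma cSu_on: "continuous_on {a0..b1} (\<lambda>\<tau>. S (u \<tau>))" if "a0 \<ge> 0" for a0 b1
  by (rule continuous_on_subset[OF cSu]) (use that in auto)

lemma V_at: assumes t: "t > 0" shows "(V has_vector_derivative S (u t)) (at t)"
proof -
  have "(V has_vector_derivative S (u t)) (at t within {0..t+1})"
    unfolding V_def by (rule vint_deriv[OF cSu_on]) (use t in auto)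
  moreover have "at t within {0..t+1} = at t" by (rule at_within_interior) (use t in simp)
  ultimately show ?thesis by simp
qed

lemma V_cont: "continuous_on {0..T} V"
  unfolding V_def by (rule vint_cont[OF cSu_on]) simp

lemma V_comb: assumes "t \<ge> 0" "h \<ge> 0" shows "V (t+h) - V t = vint {t..t+h} (\<lambda>\<tau>. S (u \<tau>))"
proof -
  define d where "d = V (t+h) - V t - vint {t..t+h} (\<lambda>\<tau>. S (u \<tau>))"
  have "inner d w = 0" for w
  proof -
    have i1: "inner (V (t+h)) w = integral {0..t+h} (\<lambda>x. inner (S (u x)) w)"
      and ii: "(\<lambda>x. inner (S (u x)) w) integrable_on {0..t+h}"
      using vint_inner[OF cSu_on[of 0 "t+h"], of w] unfolding V_def by auto
    have i2: "inner (V t) w = integral {0..t} (\<lambda>x. inner (S (u x)) w)"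
      using vint_inner[OF cSu_on[of 0 t], of w] unfolding V_def by auto
    have i3: "inner (vint {t..t+h} (\<lambda>\<tau>. S (u \<tau>))) w = integral {t..t+h} (\<lambda>x. inner (S (u x)) w)"
      using vint_inner[OF cSu_on[of t "t+h"], of w] assms by auto
    have "integral {0..t} (\<lambda>x. inner (S (u x)) w) + integral {t..t+h} (\<lambda>x. inner (S (u x)) w)
        = integral {0..t+h} (\<lambda>x. inner (S (u x)) w)"
      using Henstock_Kurzweil_Integration.integral_combine[OF _ _ ii, of t] assms by simp
    then show ?thesis unfolding d_def using i1 i2 i3 by (simp add: inner_diff_left)
  qed
  then have "inner d d = 0" by blast
  then show ?thesis unfolding d_def by simp
qed

definition zq :: "real \<Rightarrow> real \<Rightarrow> 'a" where "zq h t = (1/h) *\<^sub>R (u (t+h) - u t)"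
definition Yq :: "real \<Rightarrow> real \<Rightarrow> 'a" where "Yq h t = (1/h) *\<^sub>R (V (t+h) - V t)"
definition Phq :: "real \<Rightarrow> real \<Rightarrow> real" where
  "Phq h t = (norm (zq h t))\<^sup>2 + (norm (Yq h t))\<^sup>2 + c * inner (zq h t) (u t) + c\<^sup>2/2 * (norm (u t))\<^sup>2"
definition Gq :: "real \<Rightarrow> real \<Rightarrow> real \<Rightarrow> real" where
  "Gq L h t = - c * (norm (zq h t))\<^sup>2 - c * (norm (Yq h t))\<^sup>2
     + c * \<bar>inner (Yq h t) (Yq h t - S (u t))\<bar> + c * \<bar>inner (zq h t) (u' t - zq h t)\<bar>
     + c\<^sup>2 * \<bar>inner (u t) (u' t - zq h t)\<bar> + K * (norm (u t) + L * h) * norm (2 *\<^sub>R zq h t + c *\<^sub>R u t)"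

lemma Phq_deriv:
  assumes t: "t > 0" and h: "h > 0"
    and R: "\<And>\<tau>. \<tau> \<in> {t..t+h} \<Longrightarrow> norm (u \<tau>) \<le> norm (u t) + L * h"
  shows "\<exists>D. (Phq h has_real_derivative D) (at t) \<and> D \<le> Gq L h t"
proof -
  define Z where "Z = zq h t"
  define Yv where "Yv = Yq h t"
  define U where "U = u t"
  define U' where "U' = u' t"
  define Z' where "Z' = (1/h) *\<^sub>R (u' (t+h) - u' t)"
  define Y' where "Y' = (1/h) *\<^sub>R (S (u (t+h)) - S (u t))"
  have th: "t + h > 0" using t h by simp
  have dZ: "(zq h has_vector_derivative Z') (at t)"
  proof -
    have "((\<lambda>s. u (s + h) - u s) has_vector_derivative (u' (t+h) - u' t)) (at t)"
      by (intro has_vector_derivative_diff shift_deriv du_at th t)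
    from bounded_linear.has_vector_derivative[OF bounded_linear_scaleR_right[of "1/h"] this]
    show ?thesis unfolding Z'_def zq_def[abs_def] .
  qed
  have dY: "(Yq h has_vector_derivative Y') (at t)"
  proof -
    have "((\<lambda>s. V (s + h) - V s) has_vector_derivative (S (u (t+h)) - S (u t))) (at t)"
      by (intro has_vector_derivative_diff shift_deriv V_at th t)
    from bounded_linear.has_vector_derivative[OF bounded_linear_scaleR_right[of "1/h"] this]
    show ?thesis unfolding Y'_def Yq_def[abs_def] .
  qed
  have dU: "(u has_vector_derivative U') (at t)" unfolding U'_def using du_at[OF t] .
  have PhE: "Phq h = (\<lambda>s. inner (zq h s) (zq h s) + inner (Yq h s) (Yq h s) + c * inner (zq h s) (u s)
      + c\<^sup>2/2 * inner (u s) (u s))"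
    unfolding Phq_def[abs_def] by (simp add: power2_norm_eq_inner)
  define D where "D = (inner Z' Z + inner Z Z') + (inner Y' Yv + inner Yv Y') + c * (inner Z' U + inner Z U')
     + c\<^sup>2/2 * (inner U' U + inner U U')"
  have dPh: "(Phq h has_real_derivative D) (at t)"
    unfolding PhE D_def Z_def Yv_def U_def
    by (intro DERIV_add DERIV_cmult hvd_inner dZ dY dU)
  have uD: "u t \<in> DS" "u (t+h) \<in> DS" using mem t th by auto
  have ZD: "Z \<in> DS" unfolding Z_def zq_def using uD sub by (simp add: subspace_diff subspace_scale)
  define v where "v = 2 *\<^sub>R Z + c *\<^sub>R U"
  have vD: "v \<in> DS" unfolding v_def U_def using ZD uD sub by (simp add: subspace_add subspace_scale)
  obtain \<alpha> where \<alpha>: "inner (u' (t+h) - u' t) v =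
      - (inner (vint {t..t+h} (\<lambda>\<tau>. S (u \<tau>))) (S v) + \<alpha> + c * inner (u (t+h) - u t) v)"
    and \<alpha>b: "\<bar>\<alpha>\<bar> \<le> K * h * (norm (u t) + L * h) * norm v"
    using weak_incr[OF less_imp_le[OF t] h vD R] by blast
  have SZ: "S Z = Y'" unfolding Z_def zq_def Y'_def using lin_scale[OF lin] lin_diff[OF lin uD(2) uD(1)] uD sub
    by (simp add: subspace_diff)
  have Sv: "S v = 2 *\<^sub>R Y' + c *\<^sub>R S U" unfolding v_def using lin_add[OF lin] lin_scale[OF lin] ZD uD sub SZ
    by (simp add: subspace_scale U_def)
  have e1: "u' (t+h) - u' t = h *\<^sub>R Z'" unfolding Z'_def using h by simp
  have e2: "vint {t..t+h} (\<lambda>\<tau>. S (u \<tau>)) = h *\<^sub>R Yv" unfolding Yv_def Yq_def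
    using V_comb[of t h] t h by simp
  have e3: "u (t+h) - u t = h *\<^sub>R Z" unfolding Z_def zq_def using h by simp
  have "h * inner Z' v = - (h * inner Yv (S v) + \<alpha> + c * h * inner Z v)"
    using \<alpha> unfolding e1 e2 e3 by simp
  then have key: "inner Z' v = - inner Yv (S v) - \<alpha> / h - c * inner Z v"
    using h by (simp add: field_simps)
  have ab: "- \<alpha> / h \<le> K * (norm U + L * h) * norm v"
  proof -
    have "\<bar>\<alpha> / h\<bar> \<le> K * (norm (u t) + L * h) * norm v"
      using \<alpha>b h by (simp add: abs_divide field_simps mult.commute mult.left_commute)
    then show ?thesis unfolding U_def by linarith
  qed
  have key2: "inner Z' (2 *\<^sub>R Z + c *\<^sub>R U) = - 2 * inner Yv Y' - c * inner Yv (S U) - \<alpha> / h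
      - 2 * c * inner Z Z - c * c * inner Z U"
  proof -
    have "inner Z' v = - inner Yv (2 *\<^sub>R Y' + c *\<^sub>R S U) - \<alpha> / h - c * inner Z v" using key Sv by simp
    then show ?thesis unfolding v_def by (simp add: inner_add_right algebra_simps)
  qed
  have DE: "D = inner Z' (2 *\<^sub>R Z + c *\<^sub>R U) + 2 * inner Y' Yv + c * inner Z U' + c\<^sup>2 * inner U' U"
    unfolding D_def by (simp add: inner_add_right inner_commute power2_eq_square algebra_simps)
  have "D = - c * inner Yv (S U) - \<alpha> / h - 2 * c * inner Z Z - c * c * inner Z U + c * inner Z U' + c\<^sup>2 * inner U' U"
    unfolding DE key2 by (simp add: inner_commute)
  also have "\<dots> = - c * inner Z Z - c * inner Yv Yv + c * inner Yv (Yv - S U) + c * inner Z (U' - Z)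
      + c\<^sup>2 * inner U (U' - Z) - \<alpha> / h"
    by (simp add: inner_diff_right inner_commute power2_eq_square algebra_simps)
  also have "\<dots> \<le> Gq L h t"
  proof -
    have a1: "c * inner Yv (Yv - S U) \<le> c * \<bar>inner Yv (Yv - S U)\<bar>" using c0 by (simp add: mult_left_mono)
    have a2: "c * inner Z (U' - Z) \<le> c * \<bar>inner Z (U' - Z)\<bar>" using c0 by (simp add: mult_left_mono)
    have a3: "c\<^sup>2 * inner U (U' - Z) \<le> c\<^sup>2 * \<bar>inner U (U' - Z)\<bar>" by (simp add: mult_left_mono)
    show ?thesis unfolding Gq_def using a1 a2 a3 ab
      unfolding Z_def Yv_def U_def U'_def v_def by (simp add: power2_norm_eq_inner)
  qed
  finally show ?thesis using dPh by blast
qed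

end

context msol begin

lemma shift_cont:
  fixes f :: "real \<Rightarrow> 'b::topological_space"
  assumes "continuous_on {0..} f" "0 \<le> a" "0 \<le> h"
  shows "continuous_on {a..b1} (\<lambda>s. f (s + h))"
proof (rule continuous_on_compose2[OF assms(1)])
  show "continuous_on {a..b1} (\<lambda>x. x + h)" by (intro continuous_intros)
  show "(\<lambda>x. x + h) ` {a..b1} \<subseteq> {0..}" using assms by auto
qed

lemma shift_contV:
  assumes "0 \<le> a" "0 \<le> h"
  shows "continuous_on {a..b1} (\<lambda>s. V (s + h))"
proof (rule continuous_on_compose2[OF V_cont[of "b1 + h"]])
  show "continuous_on {a..b1} (\<lambda>x. x + h)" by (intro continuous_intros)
  show "(\<lambda>x. x + h) ` {a..b1} \<subseteq> {0..b1 + h}" using assms by auto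
qed

lemma zq_cont: "0 \<le> a \<Longrightarrow> 0 \<le> h \<Longrightarrow> continuous_on {a..b1} (zq h)"
  unfolding zq_def[abs_def]
  by (intro continuous_intros shift_cont[OF cu] continuous_on_subset[OF cu]) auto

lemma Yq_cont: "0 \<le> a \<Longrightarrow> 0 \<le> h \<Longrightarrow> continuous_on {a..b1} (Yq h)"
  unfolding Yq_def[abs_def]
  by (intro continuous_intros shift_contV continuous_on_subset[OF V_cont[of b1]]) auto

lemma Phq_cont: "0 \<le> a \<Longrightarrow> 0 \<le> h \<Longrightarrow> continuous_on {a..b1} (Phq h)"
  unfolding Phq_def[abs_def]
  by (intro continuous_intros zq_cont Yq_cont continuous_on_subset[OF cu]) auto

lemma Gq_cont: "0 \<le> a \<Longrightarrow> 0 \<le> h \<Longrightarrow> continuous_on {a..b1} (Gq L h)"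
  unfolding Gq_def[abs_def]
  by (intro continuous_intros zq_cont Yq_cont continuous_on_subset[OF cu] continuous_on_subset[OF cu']
      continuous_on_subset[OF cSu]) auto

lemma u_lip:
  assumes t: "0 \<le> t" "t \<le> \<tau>" and L: "\<And>x. x \<in> {t..\<tau>} \<Longrightarrow> norm (u' x) \<le> L"
  shows "norm (u \<tau> - u t) \<le> L * (\<tau> - t)"
proof (cases "t = \<tau>")
  case True then show ?thesis by simp
next
  case False
  then have lt: "t < \<tau>" using t by simp
  have "norm (u \<tau> - u t) \<le> L * \<tau> - L * t"
  proof (rule differentiable_bound_general[OF lt, of u "\<lambda>x. L * x" u' "\<lambda>_. L"])
    show "continuous_on {t..\<tau>} u" by (rule continuous_on_subset[OF cu]) (use t in auto)
    show "continuous_on {t..\<tau>} (\<lambda>x. L * x)" by (intro continuous_intros)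
    fix x assume x: "t < x" "x < \<tau>"
    show "(u has_vector_derivative u' x) (at x)" by (rule du_at) (use x t in auto)
    show "((\<lambda>x. L * x) has_vector_derivative L) (at x)"
      unfolding has_real_derivative_iff_has_vector_derivative[symmetric] by (auto intro!: derivative_eq_intros)
    show "norm (u' x) \<le> L" using L x by auto
  qed
  then show ?thesis by (simp add: algebra_simps)
qed

lemma Phq_int:
  assumes a: "0 \<le> a" "a \<le> bb" and h: "0 < h" and L: "\<And>x. x \<in> {0..bb+h} \<Longrightarrow> norm (u' x) \<le> L"
  shows "Phq h bb - Phq h a \<le> integral {a..bb} (Gq L h)"
proof -
  define F where "F s = Phq h s - integral {a..s} (Gq L h)" for s
  have Gc: "continuous_on {a..bb} (Gq L h)" using Gq_cont a h by simp
  have "F bb \<le> F a"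
  proof (rule DERIV_nonpos_imp_decreasing_open[OF a(2)])
    show "continuous_on {a..bb} F" unfolding F_def
      by (intro continuous_intros Phq_cont indefinite_integral_continuous_1 integrable_continuous_interval Gc)
        (use a h in auto)
    fix s assume s: "a < s" "s < bb"
    have s0: "s > 0" using s a by simp
    have R: "norm (u \<tau>) \<le> norm (u s) + L * h" if "\<tau> \<in> {s..s+h}" for \<tau>
    proof -
      have "norm (u \<tau> - u s) \<le> L * (\<tau> - s)"
        by (rule u_lip) (use that s0 s L in auto)
      also have "\<dots> \<le> L * h"
      proof -
        have "s \<in> {0..bb+h}" using s0 s h by auto
        then have "L \<ge> 0" using L[of s] norm_ge_zero[of "u' s"] by linarith
        then show ?thesis using that by (intro mult_left_mono) auto
      qed
      finally show ?thesis using norm_triangle_sub[of "u \<tau>" "u s"] by linarith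
    qed
    obtain D where D: "(Phq h has_real_derivative D) (at s)" "D \<le> Gq L h s"
      using Phq_deriv[OF s0 h R] by blast
    have "((\<lambda>x. integral {a..x} (Gq L h)) has_vector_derivative Gq L h s) (at s within {a..bb})"
      by (rule integral_has_vector_derivative[OF Gc]) (use s in auto)
    moreover have "at s within {a..bb} = at s" by (rule at_within_interior) (use s in simp)
    ultimately have "((\<lambda>x. integral {a..x} (Gq L h)) has_real_derivative Gq L h s) (at s)"
      by (simp add: has_real_derivative_iff_has_vector_derivative)
    then have "(F has_real_derivative D - Gq L h s) (at s)" unfolding F_def[abs_def]
      by (intro DERIV_diff D(1))
    then show "\<exists>y. (F has_real_derivative y) (at s) \<and> y \<le> 0" using D(2) by auto
  qed
  then show ?thesis unfolding F_def by simp
qed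

end

lemma dq_lim:
  fixes f :: "real \<Rightarrow> 'a::real_normed_vector"
  assumes d: "(f has_vector_derivative f') (at t within T)" and T: "{t..t+1} \<subseteq> T"
  shows "(\<lambda>n. (1 / (1 / (real n + 1))) *\<^sub>R (f (t + 1 / (real n + 1)) - f t)) \<longlonglongrightarrow> f'"
proof -
  define hn where "hn n = 1 / (real n + 1)" for n
  have hn0: "hn n > 0" "hn n \<le> 1" for n unfolding hn_def by (auto simp: field_simps)
  have lim: "((\<lambda>y. (1 / norm (y - t)) *\<^sub>R (f y - (f t + (y - t) *\<^sub>R f'))) \<longlongrightarrow> 0) (at t within T)"
    using d unfolding has_vector_derivative_def has_derivative_within by blast
  have fl: "filterlim (\<lambda>n. t + hn n) (at t within T) sequentially"
    unfolding filterlim_at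
  proof
    have "t + hn n \<in> T \<and> t + hn n \<noteq> t" for n using hn0[of n] T by auto
    then show "\<forall>\<^sub>F n in sequentially. t + hn n \<in> T \<and> t + hn n \<noteq> t"
      by (intro always_eventually) auto
    have "hn \<longlonglongrightarrow> 0" unfolding hn_def by (rule e_tend)
    then show "(\<lambda>n. t + hn n) \<longlonglongrightarrow> t" using tendsto_add[OF tendsto_const, of hn 0 sequentially t] by simp
  qed
  have "(\<lambda>n. (1 / norm (t + hn n - t)) *\<^sub>R (f (t + hn n) - (f t + (t + hn n - t) *\<^sub>R f'))) \<longlonglongrightarrow> 0"
    by (rule filterlim_compose[OF lim fl])
  moreover have "(1 / norm (t + hn n - t)) *\<^sub>R (f (t + hn n) - (f t + (t + hn n - t) *\<^sub>R f'))
      = (1 / hn n) *\<^sub>R (f (t + hn n) - f t) - f'" for n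
    using hn0[of n] by (simp add: algebra_simps)
  ultimately have "(\<lambda>n. (1 / hn n) *\<^sub>R (f (t + hn n) - f t) - f') \<longlonglongrightarrow> 0" by simp
  then show ?thesis unfolding hn_def[symmetric] by (rule LIM_zero_cancel)
qed

context msol begin

lemma zq_lim: "t \<ge> 0 \<Longrightarrow> (\<lambda>n. zq (1 / (real n + 1)) t) \<longlonglongrightarrow> u' t"
  unfolding zq_def by (rule dq_lim[OF du]) auto

lemma Yq_lim: assumes t: "t \<ge> 0" shows "(\<lambda>n. Yq (1 / (real n + 1)) t) \<longlonglongrightarrow> S (u t)"
proof -
  have "(V has_vector_derivative S (u t)) (at t within {0..t+2})"
    unfolding V_def by (rule vint_deriv[OF cSu_on]) (use t in auto)
  then show ?thesis unfolding Yq_def by (rule dq_lim) (use t in auto)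
qed

definition Ph0 :: "real \<Rightarrow> real" where
  "Ph0 t = (norm (u' t))\<^sup>2 + (norm (S (u t)))\<^sup>2 + c * inner (u' t) (u t) + c\<^sup>2/2 * (norm (u t))\<^sup>2"
definition G0 :: "real \<Rightarrow> real" where
  "G0 t = - c * (norm (u' t))\<^sup>2 - c * (norm (S (u t)))\<^sup>2 + K * norm (u t) * norm (2 *\<^sub>R u' t + c *\<^sub>R u t)"

lemma Phq_lim: "t \<ge> 0 \<Longrightarrow> (\<lambda>n. Phq (1 / (real n + 1)) t) \<longlonglongrightarrow> Ph0 t"
  unfolding Phq_def Ph0_def by (intro tendsto_intros zq_lim Yq_lim)

lemma Gq_lim: assumes "t \<ge> 0" shows "(\<lambda>n. Gq L (1 / (real n + 1)) t) \<longlonglongrightarrow> G0 t"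
proof -
  have "(\<lambda>n. Gq L (1 / (real n + 1)) t) \<longlonglongrightarrow>
     - c * (norm (u' t))\<^sup>2 - c * (norm (S (u t)))\<^sup>2
     + c * \<bar>inner (S (u t)) (S (u t) - S (u t))\<bar> + c * \<bar>inner (u' t) (u' t - u' t)\<bar>
     + c\<^sup>2 * \<bar>inner (u t) (u' t - u' t)\<bar> + K * (norm (u t) + L * 0) * norm (2 *\<^sub>R u' t + c *\<^sub>R u t)"
    unfolding Gq_def by (intro tendsto_intros zq_lim Yq_lim e_tend assms)
  then show ?thesis unfolding G0_def by simp
qed

lemma bnd_on:
  fixes f :: "real \<Rightarrow> 'b::real_normed_vector"
  assumes "continuous_on {0..} f"
  shows "\<exists>M\<ge>0. \<forall>x\<in>{0..T}. norm (f x) \<le> M"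
proof -
  have "compact (f ` {0..T})"
    by (rule compact_continuous_image[OF continuous_on_subset[OF assms]]) auto
  then obtain M where M: "\<forall>y\<in>f ` {0..T}. norm y \<le> M" using compact_imp_bounded bounded_iff by metis
  show ?thesis
    by (rule exI[of _ "max M 0"]) (use M in auto)
qed

lemma Yq_bound:
  assumes t: "t \<ge> 0" and h: "0 < h" and M: "\<And>x. x \<in> {t..t+h} \<Longrightarrow> norm (S (u x)) \<le> M"
  shows "norm (Yq h t) \<le> M"
proof -
  define w where "w = vint {t..t+h} (\<lambda>\<tau>. S (u \<tau>))"
  have "t \<in> {t..t+h}" using h by auto
  then have M0: "M \<ge> 0" using order_trans[OF norm_ge_zero M] by blast
  have wi: "inner w w = integral {t..t+h} (\<lambda>x. inner (S (u x)) w)"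
    and ii: "(\<lambda>x. inner (S (u x)) w) integrable_on {t..t+h}"
    using vint_inner[OF cSu_on[OF t, of "t+h"], of w] unfolding w_def by auto
  have bd: "norm (inner (S (u x)) w) \<le> M * norm w" if x: "x \<in> {t..t+h} - {}" for x
  proof -
    have "norm (inner (S (u x)) w) \<le> norm (S (u x)) * norm w" using Cauchy_Schwarz_ineq2 by simp
    also have "\<dots> \<le> M * norm w" using M x by (intro mult_right_mono) auto
    finally show ?thesis .
  qed
  have M0': "0 \<le> M * norm w" using M0 by simp
  note B = has_integral_bound_real[OF M0' finite.emptyI integrable_integral[OF ii] bd]
  then have "norm (integral {t..t+h} (\<lambda>x. inner (S (u x)) w)) \<le> M * norm w * h" using h by simp
  then have "(norm w)\<^sup>2 \<le> M * norm w * h" using wi h by (simp add: power2_norm_eq_inner)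
  then have nw: "norm w \<le> M * h"
    by (cases "norm w = 0") (use M0 h in \<open>auto simp: power2_eq_square mult.commute mult.left_commute\<close>)
  have "Yq h t = (1/h) *\<^sub>R w" unfolding Yq_def w_def using V_comb[of t h] t h by simp
  then have "norm (Yq h t) = norm w / h" using h by simp
  also have "\<dots> \<le> M" using nw h by (simp add: field_simps)
  finally show ?thesis .
qed

lemma zq_bound:
  assumes t: "t \<ge> 0" and h: "0 < h" and L: "\<And>x. x \<in> {t..t+h} \<Longrightarrow> norm (u' x) \<le> L"
  shows "norm (zq h t) \<le> L"
proof -
  have "norm (u (t+h) - u t) \<le> L * (t + h - t)" by (rule u_lip) (use t h L in auto)
  moreover have "norm (zq h t) = norm (u (t+h) - u t) / h" unfolding zq_def norm_scaleR using h by simp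
  ultimately have "h * norm (zq h t) \<le> h * L" using h by (simp add: field_simps mult.commute)
  then show ?thesis using h by (simp add: mult_le_cancel_left_pos)
qed

end

context msol begin

lemma Gq_bound:
  assumes t: "0 \<le> t" "t \<le> T" and h: "0 < h" "h \<le> 1"
    and L: "\<And>x. x \<in> {0..T+1} \<Longrightarrow> norm (u' x) \<le> L"
    and Ms: "\<And>x. x \<in> {0..T+1} \<Longrightarrow> norm (S (u x)) \<le> Ms"
    and Mu: "\<And>x. x \<in> {0..T+1} \<Longrightarrow> norm (u x) \<le> Mu"
    and nn: "0 \<le> L" "0 \<le> Ms" "0 \<le> Mu"
  shows "\<bar>Gq L h t\<bar> \<le> c * L\<^sup>2 + c * Ms\<^sup>2 + c * (Ms * (2 * Ms)) + c * (L * (2 * L)) + c\<^sup>2 * (Mu * (2 * L))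
      + K * (Mu + L) * (2 * L + c * Mu)"
proof -
  define z where "z = zq h t"
  define Y where "Y = Yq h t"
  have tin: "t \<in> {0..T+1}" using t by auto
  have zb: "norm z \<le> L" unfolding z_def by (rule zq_bound) (use t h L in auto)
  have Yb: "norm Y \<le> Ms" unfolding Y_def by (rule Yq_bound) (use t h Ms in auto)
  have ub: "norm (u t) \<le> Mu" "norm (u' t) \<le> L" "norm (S (u t)) \<le> Ms" using Mu L Ms tin by auto
  have c0': "c \<ge> 0" using c0 by simp
  have t1: "c * (norm z)\<^sup>2 \<le> c * L\<^sup>2" using zb c0' by (intro mult_left_mono power_mono) auto
  have t2: "c * (norm Y)\<^sup>2 \<le> c * Ms\<^sup>2" using Yb c0' by (intro mult_left_mono power_mono) auto
  have t3: "c * \<bar>inner Y (Y - S (u t))\<bar> \<le> c * (Ms * (2 * Ms))"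
  proof -
    have "\<bar>inner Y (Y - S (u t))\<bar> \<le> norm Y * norm (Y - S (u t))" by (rule Cauchy_Schwarz_ineq2)
    also have "\<dots> \<le> Ms * (2 * Ms)"
    proof (rule mult_mono)
      show "norm (Y - S (u t)) \<le> 2 * Ms" using norm_triangle_ineq4[of Y "S (u t)"] Yb ub by linarith
    qed (use Yb nn in auto)
    finally show ?thesis using c0' by (intro mult_left_mono) auto
  qed
  have t4: "c * \<bar>inner z (u' t - z)\<bar> \<le> c * (L * (2 * L))"
  proof -
    have "\<bar>inner z (u' t - z)\<bar> \<le> norm z * norm (u' t - z)" by (rule Cauchy_Schwarz_ineq2)
    also have "\<dots> \<le> L * (2 * L)"
    proof (rule mult_mono)
      show "norm (u' t - z) \<le> 2 * L" using norm_triangle_ineq4[of "u' t" z] zb ub by linarith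
    qed (use zb nn in auto)
    finally show ?thesis using c0' by (intro mult_left_mono) auto
  qed
  have t5: "c\<^sup>2 * \<bar>inner (u t) (u' t - z)\<bar> \<le> c\<^sup>2 * (Mu * (2 * L))"
  proof -
    have "\<bar>inner (u t) (u' t - z)\<bar> \<le> norm (u t) * norm (u' t - z)" by (rule Cauchy_Schwarz_ineq2)
    also have "\<dots> \<le> Mu * (2 * L)"
    proof (rule mult_mono)
      show "norm (u' t - z) \<le> 2 * L" using norm_triangle_ineq4[of "u' t" z] zb ub by linarith
    qed (use ub nn in auto)
    finally show ?thesis by (intro mult_left_mono) auto
  qed
  have t6: "K * (norm (u t) + L * h) * norm (2 *\<^sub>R z + c *\<^sub>R u t) \<le> K * (Mu + L) * (2 * L + c * Mu)"
  proof -
    have a: "norm (u t) + L * h \<le> Mu + L"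
    proof -
      have "L * h \<le> L" using h nn by (simp add: mult_left_le)
      then show ?thesis using ub by linarith
    qed
    have b: "norm (2 *\<^sub>R z + c *\<^sub>R u t) \<le> 2 * L + c * Mu"
    proof -
      have "norm (2 *\<^sub>R z + c *\<^sub>R u t) \<le> norm (2 *\<^sub>R z) + norm (c *\<^sub>R u t)" by (rule norm_triangle_ineq)
      also have "\<dots> = 2 * norm z + c * norm (u t)" using c0' by simp
      also have "\<dots> \<le> 2 * L + c * Mu" using zb ub c0' by (intro add_mono mult_left_mono) auto
      finally show ?thesis .
    qed
    have "(norm (u t) + L * h) * norm (2 *\<^sub>R z + c *\<^sub>R u t) \<le> (Mu + L) * (2 * L + c * Mu)"
      by (rule mult_mono[OF a b]) (use nn h in auto)
    then show ?thesis using K0 by (simp add: mult.assoc mult_left_mono)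
  qed
  have t6n: "0 \<le> K * (norm (u t) + L * h) * norm (2 *\<^sub>R z + c *\<^sub>R u t)"
    using K0 nn h by simp
  have pos: "0 \<le> c * (norm z)\<^sup>2" "0 \<le> c * (norm Y)\<^sup>2" "0 \<le> c * \<bar>inner Y (Y - S (u t))\<bar>"
    "0 \<le> c * \<bar>inner z (u' t - z)\<bar>" "0 \<le> c\<^sup>2 * \<bar>inner (u t) (u' t - z)\<bar>" using c0' by auto
  show ?thesis unfolding Gq_def z_def[symmetric] Y_def[symmetric] abs_le_iff
    using t1 t2 t3 t4 t5 t6 t6n pos by (intro conjI; linarith)
qed

lemma Ph0_int:
  assumes a: "0 \<le> a" "a \<le> bb"
  shows "Ph0 bb - Ph0 a \<le> integral {a..bb} G0"
proof -
  obtain L where L: "L \<ge> 0" "\<And>x. x \<in> {0..bb+1} \<Longrightarrow> norm (u' x) \<le> L" using bnd_on[OF cu'] by blast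
  obtain Ms where Ms: "Ms \<ge> 0" "\<And>x. x \<in> {0..bb+1} \<Longrightarrow> norm (S (u x)) \<le> Ms" using bnd_on[OF cSu] by blast
  obtain Mu where Mu: "Mu \<ge> 0" "\<And>x. x \<in> {0..bb+1} \<Longrightarrow> norm (u x) \<le> Mu" using bnd_on[OF cu] by blast
  define hn where "hn n = 1 / (real n + 1)" for n
  have hn0: "hn n > 0" "hn n \<le> 1" for n unfolding hn_def by (auto simp: field_simps)
  define B where "B = c * L\<^sup>2 + c * Ms\<^sup>2 + c * (Ms * (2 * Ms)) + c * (L * (2 * L)) + c\<^sup>2 * (Mu * (2 * L))
      + K * (Mu + L) * (2 * L + c * Mu)"
  have ineq: "Phq (hn n) bb - Phq (hn n) a \<le> integral {a..bb} (Gq L (hn n))" for n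
  proof (rule Phq_int[OF a hn0(1)])
    fix x assume "x \<in> {0..bb + hn n}"
    then show "norm (u' x) \<le> L" using L(2) hn0(2)[of n] by auto
  qed
  have l1: "(\<lambda>n. Phq (hn n) bb - Phq (hn n) a) \<longlonglongrightarrow> Ph0 bb - Ph0 a"
    unfolding hn_def using a by (intro tendsto_intros Phq_lim) auto
  have dc: "(\<lambda>n. integral {a..bb} (Gq L (hn n))) \<longlonglongrightarrow> integral {a..bb} G0"
  proof (rule dominated_convergence(2)[of "\<lambda>n. Gq L (hn n)" _ "\<lambda>_. B"])
    show "Gq L (hn n) integrable_on {a..bb}" for n
      by (rule integrable_continuous_interval[OF Gq_cont]) (use a hn0(1)[of n] in auto)
    show "(\<lambda>_. B) integrable_on {a..bb}" by (intro integrable_continuous_interval continuous_intros)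
    fix n x assume x: "x \<in> {a..bb}"
    show "norm (Gq L (hn n) x) \<le> B" unfolding B_def real_norm_def
      by (rule Gq_bound[of x bb]) (use x a hn0 L Ms Mu in auto)
  next
    fix x assume x: "x \<in> {a..bb}"
    show "(\<lambda>n. Gq L (hn n) x) \<longlonglongrightarrow> G0 x" unfolding hn_def by (rule Gq_lim) (use x a in auto)
  qed
  show ?thesis by (rule LIMSEQ_le[OF l1 dc]) (use ineq in auto)
qed

end

definition dlt0 :: "real \<Rightarrow> real \<Rightarrow> real \<Rightarrow> real" where
  "dlt0 b c K = c - (c\<^sup>2 + 2 * K) / (2 * sqrt (b + c\<^sup>2 / 4))"

lemma amgm_aux:
  fixes x y sb :: real
  assumes "sb \<ge> 0"
  shows "2 * sb * x * y \<le> x\<^sup>2 + sb\<^sup>2 * y\<^sup>2"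
proof -
  have "0 \<le> (x - sb * y)\<^sup>2" by simp
  then show ?thesis by (simp add: power2_eq_square algebra_simps)
qed

context msol begin

lemma G0_le:
  assumes t: "t \<ge> 0" and small: "K < c * sqrt (b + c\<^sup>2 / 4) - c\<^sup>2 / 2"
  shows "G0 t \<le> - dlt0 b c K * Ph0 t" and "Ph0 t \<ge> 0"
proof -
  define U where "U = u t"
  define P where "P = u' t"
  define w where "w = P + (c/2) *\<^sub>R U"
  define sb where "sb = sqrt (b + c\<^sup>2 / 4)"
  have sb0: "sb > 0" unfolding sb_def using b0 by (simp add: add_pos_nonneg)
  have sb2: "sb\<^sup>2 = b + c\<^sup>2/4" unfolding sb_def using b0 by simp
  have coU: "b * (norm U)\<^sup>2 \<le> (norm (S U))\<^sup>2" unfolding U_def using coer mem t by simp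
  have PhE: "Ph0 t = (norm w)\<^sup>2 + (norm (S U))\<^sup>2 + c\<^sup>2/4 * (norm U)\<^sup>2"
    unfolding Ph0_def w_def U_def[symmetric] P_def[symmetric] power2_norm_eq_inner
    by (simp add: inner_add_left inner_add_right inner_commute power2_eq_square algebra_simps)
  have Ph_lb: "Ph0 t \<ge> (norm w)\<^sup>2 + sb\<^sup>2 * (norm U)\<^sup>2" unfolding PhE sb2 using coU by (simp add: algebra_simps)
  have "0 \<le> (norm w)\<^sup>2 + sb\<^sup>2 * (norm U)\<^sup>2" by simp
  then show "Ph0 t \<ge> 0" using Ph_lb by linarith
  have am: "2 * sb * norm w * norm U \<le> Ph0 t" using amgm_aux[of sb "norm w" "norm U"] sb0 Ph_lb by linarith
  have nP: "norm (2 *\<^sub>R P + c *\<^sub>R U) = 2 * norm w"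
  proof -
    have "2 *\<^sub>R P + c *\<^sub>R U = 2 *\<^sub>R w" unfolding w_def by (simp add: algebra_simps)
    then show ?thesis by simp
  qed
  have GE: "G0 t = - c * Ph0 t + c\<^sup>2 * inner w U + 2 * K * norm U * norm w"
    unfolding G0_def U_def[symmetric] P_def[symmetric] nP PhE
    unfolding w_def power2_norm_eq_inner
    by (simp add: inner_add_left inner_add_right inner_commute power2_eq_square algebra_simps)
  have "c\<^sup>2 * inner w U \<le> c\<^sup>2 * (norm w * norm U)"
    by (intro mult_left_mono) (auto intro: order_trans[OF abs_ge_self Cauchy_Schwarz_ineq2])
  then have "G0 t \<le> - c * Ph0 t + (c\<^sup>2 + 2 * K) * (norm w * norm U)" unfolding GE by (simp add: algebra_simps)
  also have "(c\<^sup>2 + 2 * K) * (norm w * norm U) \<le> (c\<^sup>2 + 2 * K) / (2 * sb) * Ph0 t"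
  proof -
    have k: "c\<^sup>2 + 2 * K \<ge> 0" using K0 by simp
    have "(c\<^sup>2 + 2 * K) * (norm w * norm U) = (c\<^sup>2 + 2 * K) / (2 * sb) * (2 * sb * norm w * norm U)"
      using sb0 by (simp add: field_simps)
    also have "\<dots> \<le> (c\<^sup>2 + 2 * K) / (2 * sb) * Ph0 t"
      by (rule mult_left_mono[OF am]) (use k sb0 in simp)
    finally show ?thesis .
  qed
  finally show "G0 t \<le> - dlt0 b c K * Ph0 t" unfolding dlt0_def sb_def[symmetric] by (simp add: algebra_simps)
qed

lemma Ph0_cont: "0 \<le> a \<Longrightarrow> continuous_on {a..b1} Ph0"
  unfolding Ph0_def[abs_def]
  by (intro continuous_intros continuous_on_subset[OF cu] continuous_on_subset[OF cu'] continuous_on_subset[OF cSu]) auto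

lemma G0_cont: "0 \<le> a \<Longrightarrow> continuous_on {a..b1} G0"
  unfolding G0_def[abs_def]
  by (intro continuous_intros continuous_on_subset[OF cu] continuous_on_subset[OF cu'] continuous_on_subset[OF cSu]) auto

lemma Ph0_step:
  assumes a: "0 \<le> a" "a \<le> bb" and small: "K < c * sqrt (b + c\<^sup>2 / 4) - c\<^sup>2 / 2"
  shows "Ph0 bb - Ph0 a \<le> - dlt0 b c K * integral {a..bb} Ph0"
proof -
  have "Ph0 bb - Ph0 a \<le> integral {a..bb} G0" using Ph0_int[OF a] .
  also have "\<dots> \<le> integral {a..bb} (\<lambda>x. - dlt0 b c K * Ph0 x)"
    by (rule integral_le) (use a G0_le[OF _ small] in \<open>auto intro!: integrable_continuous_interval continuous_intros G0_cont Ph0_cont\<close>)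
  also have "\<dots> = - dlt0 b c K * integral {a..bb} Ph0" by simp
  finally show ?thesis .
qed

end

lemma dlt0_pos:
  assumes "b > 0" "c > 0" "K < c * sqrt (b + c\<^sup>2 / 4) - c\<^sup>2 / 2"
  shows "dlt0 b c K > 0"
proof -
  have sb: "sqrt (b + c\<^sup>2 / 4) > 0" using assms by (simp add: add_pos_nonneg)
  have "c\<^sup>2 + 2 * K < 2 * c * sqrt (b + c\<^sup>2 / 4)" using assms(3) by simp
  then have "(c\<^sup>2 + 2 * K) / (2 * sqrt (b + c\<^sup>2 / 4)) < c" using sb by (simp add: field_simps)
  then show ?thesis unfolding dlt0_def by simp
qed

context msol begin

lemma decay_Ph0:
  assumes small: "K < c * sqrt (b + c\<^sup>2 / 4) - c\<^sup>2 / 2" and st: "0 \<le> s" "s \<le> t"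
  shows "Ph0 t \<le> 2 * exp (- (ln 2 * dlt0 b c K) * (t - s)) * Ph0 s"
proof -
  define d where "d = dlt0 b c K"
  have d0: "d > 0" unfolding d_def using dlt0_pos[OF b0 c0 small] .
  have nn: "x \<ge> 0 \<Longrightarrow> Ph0 x \<ge> 0" for x using G0_le(2)[OF _ small] by blast
  have mono: "Ph0 bb \<le> Ph0 a" if "0 \<le> a" "a \<le> bb" for a bb
  proof -
    have "0 \<le> integral {a..bb} Ph0"
      by (rule integral_nonneg) (use that nn in \<open>auto intro!: integrable_continuous_interval Ph0_cont\<close>)
    moreover have "0 \<le> d * integral {a..bb} Ph0" using d0 calculation by simp
    ultimately show ?thesis using Ph0_step[OF that small] unfolding d_def[symmetric] by linarith
  qed
  have contr: "Ph0 bb * (1 + d * (bb - a)) \<le> Ph0 a" if ab: "0 \<le> a" "a \<le> bb" for a bb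
  proof -
    have "integral {a..bb} (\<lambda>_. Ph0 bb) \<le> integral {a..bb} Ph0"
      by (rule integral_le) (use ab mono in \<open>auto intro!: integrable_continuous_interval Ph0_cont\<close>)
    then have "Ph0 bb * (bb - a) \<le> integral {a..bb} Ph0" using ab by (simp add: mult.commute)
    then have "d * (Ph0 bb * (bb - a)) \<le> d * integral {a..bb} Ph0" using d0 by (simp add: mult_left_mono)
    then show ?thesis using Ph0_step[OF ab small] unfolding d_def[symmetric] by (simp add: algebra_simps)
  qed
  have half: "Ph0 (x + 1/d) \<le> Ph0 x / 2" if "x \<ge> 0" for x
    using contr[of x "x + 1/d"] that d0 by (simp add: field_simps)
  have iter: "Ph0 (s + real n / d) \<le> Ph0 s / 2 ^ n" for n
  proof (induction n)
    case 0 then show ?case by simp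
  next
    case (Suc n)
    have x0: "s + real n / d \<ge> 0" using st d0 by simp
    have eq: "s + real (Suc n) / d = (s + real n / d) + 1 / d" by (simp add: add_divide_distrib)
    have "Ph0 (s + real (Suc n) / d) \<le> Ph0 (s + real n / d) / 2" unfolding eq by (rule half[OF x0])
    also have "\<dots> \<le> Ph0 s / 2 ^ n / 2" using Suc by simp
    finally show ?case by simp
  qed
  define n where "n = nat \<lfloor>d * (t - s)\<rfloor>"
  have dts: "d * (t - s) \<ge> 0" using d0 st by simp
  have n1: "real n \<le> d * (t - s)" unfolding n_def using dts by linarith
  have n2: "real n > d * (t - s) - 1" unfolding n_def using dts by linarith
  have "s + real n / d \<le> t" using n1 d0 by (simp add: field_simps)
  then have "Ph0 t \<le> Ph0 (s + real n / d)" by (intro mono) (use st d0 in auto)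
  also have "\<dots> \<le> Ph0 s / 2 ^ n" by (rule iter)
  also have "\<dots> = exp (- (ln 2 * real n)) * Ph0 s"
  proof -
    have "(2::real) ^ n = exp (real n * ln 2)" by (simp add: exp_of_nat_mult)
    then have "(2::real) ^ n = exp (ln 2 * real n)" by (simp add: mult.commute)
    then show ?thesis by (simp add: exp_minus field_simps)
  qed
  also have "\<dots> \<le> 2 * exp (- (ln 2 * d) * (t - s)) * Ph0 s"
  proof (rule mult_right_mono)
    have "- (ln 2 * real n) \<le> ln 2 - ln 2 * d * (t - s)"
    proof -
      have "ln 2 * (d * (t - s) - 1) \<le> ln 2 * real n" by (rule mult_left_mono) (use n2 in auto)
      then show ?thesis by (simp add: algebra_simps)
    qed
    then have "exp (- (ln 2 * real n)) \<le> exp (ln 2 - ln 2 * d * (t - s))" by simp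
    also have "\<dots> = 2 * exp (- (ln 2 * d) * (t - s))"
    proof -
      have "ln 2 - ln 2 * d * (t - s) = ln 2 + (- (ln 2 * d) * (t - s))" by simp
      then show ?thesis by (simp only: exp_add) simp
    qed
    finally show "exp (- (ln 2 * real n)) \<le> 2 * exp (- (ln 2 * d) * (t - s))" .
  qed (use nn st in auto)
  finally show ?thesis unfolding d_def .
qed

lemma E_le_Ph0:
  assumes t: "t \<ge> 0"
  shows "(norm (S (u t)))\<^sup>2 + (norm (u' t))\<^sup>2 \<le> 3 * Ph0 t"
proof -
  define U where "U = u t"
  define P where "P = u' t"
  define w where "w = P + (c/2) *\<^sub>R U"
  have PhE: "Ph0 t = (norm w)\<^sup>2 + (norm (S U))\<^sup>2 + c\<^sup>2/4 * (norm U)\<^sup>2"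
    unfolding Ph0_def w_def U_def[symmetric] P_def[symmetric] power2_norm_eq_inner
    by (simp add: inner_add_left inner_add_right inner_commute power2_eq_square algebra_simps)
  have "P = w - (c/2) *\<^sub>R U" unfolding w_def by simp
  then have "norm P \<le> norm w + \<bar>c/2\<bar> * norm U" using norm_triangle_ineq4[of w "(c/2) *\<^sub>R U"] by simp
  then have "(norm P)\<^sup>2 \<le> (norm w + \<bar>c/2\<bar> * norm U)\<^sup>2" by (rule power_mono) simp
  also have "\<dots> \<le> 2 * (norm w)\<^sup>2 + 2 * (\<bar>c/2\<bar> * norm U)\<^sup>2"
    using amgm_aux[of 1 "norm w" "\<bar>c/2\<bar> * norm U"] by (simp add: power2_eq_square algebra_simps)
  also have "\<dots> = 2 * (norm w)\<^sup>2 + c\<^sup>2/2 * (norm U)\<^sup>2" by (simp add: power_mult_distrib power2_eq_square)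
  finally have "(norm P)\<^sup>2 \<le> 2 * (norm w)\<^sup>2 + c\<^sup>2/2 * (norm U)\<^sup>2" .
  moreover have "0 \<le> (norm w)\<^sup>2" "0 \<le> c\<^sup>2/4 * (norm U)\<^sup>2" "0 \<le> (norm (S U))\<^sup>2" by auto
  moreover have "c\<^sup>2/2 * (norm U)\<^sup>2 = 2 * (c\<^sup>2/4 * (norm U)\<^sup>2)" by simp
  ultimately have "(norm P)\<^sup>2 \<le> 2 * (norm w)\<^sup>2 + 2 * (c\<^sup>2/4 * (norm U)\<^sup>2)"
    "0 \<le> (norm w)\<^sup>2" "0 \<le> c\<^sup>2/4 * (norm U)\<^sup>2" "0 \<le> (norm (S U))\<^sup>2" by auto
  moreover have gen: "s1 + p1 \<le> 3*(w1 + s1 + x1)"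
    if "p1 \<le> 2*w1 + 2*x1" "0 \<le> w1" "0 \<le> x1" "0 \<le> s1" for p1 w1 s1 x1 :: real
    using that unfolding distrib_left by linarith
  ultimately show ?thesis unfolding PhE U_def[symmetric] P_def[symmetric] by blast
qed

lemma Ph0_le_E:
  assumes t: "t \<ge> 0"
  shows "Ph0 t \<le> (2 + 3 * c\<^sup>2 / (4 * b)) * ((norm (S (u t)))\<^sup>2 + (norm (u' t))\<^sup>2)"
proof -
  define U where "U = u t"
  define P where "P = u' t"
  have coU: "b * (norm U)\<^sup>2 \<le> (norm (S U))\<^sup>2" unfolding U_def using coer mem t by simp
  have "c * inner P U \<le> c * (norm P * norm U)"
    using c0 by (intro mult_left_mono) (auto intro: order_trans[OF abs_ge_self Cauchy_Schwarz_ineq2])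
  also have "\<dots> \<le> (norm P)\<^sup>2 + c\<^sup>2/4 * (norm U)\<^sup>2"
    using amgm_aux[of 1 "norm P" "c/2 * norm U"] by (simp add: power2_eq_square algebra_simps)
  finally have cr: "c * inner P U \<le> (norm P)\<^sup>2 + c\<^sup>2/4 * (norm U)\<^sup>2" .
  have U2: "3 * c\<^sup>2 / 4 * (norm U)\<^sup>2 \<le> 3 * c\<^sup>2 / (4 * b) * (norm (S U))\<^sup>2"
  proof -
    have "(norm U)\<^sup>2 \<le> (norm (S U))\<^sup>2 / b" using coU b0 by (simp add: field_simps mult.commute)
    then have "3 * c\<^sup>2 / 4 * (norm U)\<^sup>2 \<le> 3 * c\<^sup>2 / 4 * ((norm (S U))\<^sup>2 / b)" by (intro mult_left_mono) auto
    then show ?thesis by (simp add: field_simps)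
  qed
  have "Ph0 t \<le> 2 * (norm P)\<^sup>2 + (norm (S U))\<^sup>2 + 3 * c\<^sup>2 / 4 * (norm U)\<^sup>2"
    unfolding Ph0_def U_def[symmetric] P_def[symmetric] using cr by simp
  also have "\<dots> \<le> 2 * (norm P)\<^sup>2 + (1 + 3 * c\<^sup>2 / (4 * b)) * (norm (S U))\<^sup>2" using U2 by (simp add: algebra_simps)
  also have "\<dots> \<le> (2 + 3 * c\<^sup>2 / (4 * b)) * ((norm (S U))\<^sup>2 + (norm P)\<^sup>2)"
  proof -
    define q where "q = 3 * c\<^sup>2 / (4 * b)"
    have "0 \<le> q * (norm P)\<^sup>2" using b0 unfolding q_def by simp
    moreover have "0 \<le> (norm (S U))\<^sup>2" by simp
    moreover have "(2 + q) * ((norm (S U))\<^sup>2 + (norm P)\<^sup>2) = 2 * (norm P)\<^sup>2 + (1 + q) * (norm (S U))\<^sup>2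
       + ((norm (S U))\<^sup>2 + q * (norm P)\<^sup>2)" by (simp add: algebra_simps)
    ultimately show ?thesis unfolding q_def[symmetric] by linarith
  qed
  finally show ?thesis unfolding U_def P_def .
qed

lemma decay_E:
  assumes small: "K < c * sqrt (b + c\<^sup>2 / 4) - c\<^sup>2 / 2" and st: "0 \<le> s" "s \<le> t"
  shows "(norm (S (u t)))\<^sup>2 + (norm (u' t))\<^sup>2
    \<le> (6 * (2 + 3 * c\<^sup>2 / (4 * b))) * ((norm (S (u s)))\<^sup>2 + (norm (u' s))\<^sup>2) * exp (- (ln 2 * dlt0 b c K) * (t - s))"
proof -
  define ex where "ex = exp (- (ln 2 * dlt0 b c K) * (t - s))"
  define C0 where "C0 = 2 + 3 * c\<^sup>2 / (4 * b)"
  define Es where "Es = (norm (S (u s)))\<^sup>2 + (norm (u' s))\<^sup>2"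
  have ex0: "ex > 0" unfolding ex_def by simp
  have dP: "Ph0 t \<le> 2 * ex * Ph0 s" unfolding ex_def by (rule decay_Ph0[OF small st])
  have PE: "Ph0 s \<le> C0 * Es" unfolding C0_def Es_def by (rule Ph0_le_E[OF st(1)])
  have "(norm (S (u t)))\<^sup>2 + (norm (u' t))\<^sup>2 \<le> 3 * Ph0 t" using E_le_Ph0 st by simp
  also have "\<dots> \<le> 3 * (2 * ex * Ph0 s)" using dP by simp
  also have "\<dots> \<le> 3 * (2 * ex * (C0 * Es))"
    using PE ex0 by (intro mult_left_mono) auto
  also have "\<dots> = (6 * C0) * Es * ex" by (simp add: algebra_simps)
  finally show ?thesis unfolding ex_def C0_def Es_def .
qed

end

lemma K_nonneg:
  fixes A :: "real \<Rightarrow> 'a::real_normed_vector"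
  assumes "AE t in lborel. 0 \<le> t \<longrightarrow> norm (A t) \<le> K"
  shows "K \<ge> 0"
proof (rule ccontr)
  assume K: "\<not> K \<ge> 0"
  have "AE t in lborel. (t::real) < 0"
  proof (rule eventually_mono[OF assms])
    fix t :: real assume h: "0 \<le> t \<longrightarrow> norm (A t) \<le> K"
    show "t < 0"
    proof (rule ccontr)
      assume "\<not> t < 0"
      then have "norm (A t) \<le> K" using h by simp
      then show False using K norm_ge_zero[of "A t"] by linarith
    qed
  qed
  then obtain N where N: "{t \<in> space lborel. \<not> (t::real) < 0} \<subseteq> N" "emeasure lborel N = 0" "N \<in> sets lborel"
    using AE_E by blast
  have "{0..1::real} \<subseteq> N" using N(1) by auto
  then have "emeasure lborel {0..1::real} \<le> emeasure lborel N" by (rule emeasure_mono[OF _ N(3)])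
  then show False using N(2) by simp
qed

theorem corollary4p2:
  fixes DB DS :: "'a::{real_inner,complete_space} set"
    and B S :: "'a \<Rightarrow> 'a"
    and A :: "real \<Rightarrow> 'a \<Rightarrow>\<^sub>L 'a"
    and b c K :: real
  assumes B_sa: "self_adjoint_op DB B"
    and b_pos: "b > 0"
    and coercive: "\<forall>v\<in>DB. inner (B v) v \<ge> b * (norm v)\<^sup>2"
    and S_sqrt: "is_sqrt_op DS S DB B"
    and A_meas: "\<forall>x. (\<lambda>t. blinfun_apply (A t) x) \<in> borel_measurable (restrict_space lborel {0..})"
    and A_bound: "AE t in lborel. 0 \<le> t \<longrightarrow> norm (A t) \<le> K"
    and c_pos: "c > 0"
    and small: "K < c * sqrt (b + c\<^sup>2 / 4) - c\<^sup>2 / 2"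
  shows "\<exists>\<delta>>0. \<exists>M>0. \<forall>u0 u1 u u'. u0 \<in> DS \<longrightarrow> mild_solution DS S A c u0 u1 u u' \<longrightarrow>
           (\<forall>s t. 0 \<le> s \<longrightarrow> s \<le> t \<longrightarrow>
              (norm (S (u t)))\<^sup>2 + (norm (u' t))\<^sup>2
                \<le> M * ((norm (S (u s)))\<^sup>2 + (norm (u' s))\<^sup>2) * exp (- \<delta> * (t - s)))"
proof -
  have K0: "K \<ge> 0" by (rule K_nonneg[OF A_bound])
  have coer: "b * (norm v)\<^sup>2 \<le> (norm (S v))\<^sup>2" if "v \<in> DS" for v
    by (rule coerc_S[OF S_sqrt coercive that])
  have lin: "linear_op_on DS S" using S_sqrt by (simp add: is_sqrt_op_def self_adjoint_op_def)
  define \<delta> where "\<delta> = ln 2 * dlt0 b c K"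
  define M where "M = 6 * (2 + 3 * c\<^sup>2 / (4 * b))"
  have \<delta>0: "\<delta> > 0" unfolding \<delta>_def using dlt0_pos[OF b_pos c_pos small] by simp
  have M0: "M > 0" unfolding M_def using b_pos by (simp add: add_pos_nonneg)
  have main: "(norm (S (u t)))\<^sup>2 + (norm (u' t))\<^sup>2
                \<le> M * ((norm (S (u s)))\<^sup>2 + (norm (u' s))\<^sup>2) * exp (- \<delta> * (t - s))"
    if ms: "mild_solution DS S A c u0 u1 u u'" and st: "0 \<le> s" "s \<le> t" for u0 u1 u u' s t
  proof -
    have m1: "\<forall>t\<ge>0. u t \<in> DS" and m2: "continuous_on {0..} (\<lambda>t. S (u t))" and m3: "continuous_on {0..} u"
      and m4: "\<forall>t\<ge>0. (u has_vector_derivative u' t) (at t within {0..})" and m5: "continuous_on {0..} u'"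
      and m8: "\<forall>v\<in>DS. \<forall>t\<ge>0.
        (\<lambda>s. inner (S (u s)) (S v) + inner (blinfun_apply (A s) (u s)) v + c * inner (u' s) v)
          integrable_on {0..t} \<and>
        inner (u' t) v = inner u1 v -
          integral {0..t} (\<lambda>s. inner (S (u s)) (S v) + inner (blinfun_apply (A s) (u s)) v
                                 + c * inner (u' s) v)"
      using ms unfolding mild_solution_def by blast+
    interpret msol DS S A c K b u1 u u'
      apply unfold_locales
                 apply (rule lin)
                apply (use m1 in simp)
               apply (rule m2)
              apply (rule m3)
             apply (use m4 in simp)
            apply (rule m5)
           apply (use m8 in blast)
          apply (rule A_bound)
         apply (rule K0)
        apply (rule c_pos)
       apply (rule b_pos)
      apply (erule coer)
      done
    show ?thesis unfolding M_def \<delta>_def by (rule decay_E[OF small st])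
  qed
  show ?thesis
    by (rule exI[of _ \<delta>], rule conjI[OF \<delta>0], rule exI[of _ M], rule conjI[OF M0]) (use main in blast)
qed

end
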